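(* Let $3\le n\le N$. For every $x$ at which all the functions $\Theta_n,\Lambda_n(\cdot;i,k)$ ($i,k\in\{1,2\}$) are defined at both $x$ and $x-1$ and $\Lambda_n(x;1,1)\neq 0$, $$\mathcal F_n(x)\nabla^2\mathbb K_n(x)+\mathcal G_n(x)\nabla\mathbb K_n(x)+\mathcal H_n(x)\mathbb K_n(x)=0,$$ where $\nabla^2=\nabla\circ\nabla$, $\mathcal F_n(x)=\Theta_n(x)\Theta_n(x-1)$, $$\mathcal G_n(x)=\Theta_n(x)\big(\nabla\Theta_n(x)+\Lambda_n(x-1;2,1)+\Lambda_n(x;1,2)\big)-\frac{\nabla\Lambda_n(x;1,1)\,\big(\Theta_n(x)+\Lambda_n(x;1,2)\big)\Theta_n(x)}{\Lambda_n(x;1,1)},$$ $$\mathcal H_n(x)=\Theta_n(x)\nabla\Lambda_n(x;2,1)+\Lambda_n(x;1,2)\Lambda_n(x;2,1)-\frac{\nabla\Lambda_n(x;1,1)\,\Lambda_n(x;2,1)\big(\Theta_n(x)+\Lambda_n(x;1,2)\big)}{\Lambda_n(x;1,1)}-\Lambda_n(x-1;1,1)\Lambda_n(x;2,2).$$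
   Context: Fix an integer $N\ge 1$ and $0<p<1$. Notation: $(a)_0=1$, $(a)_k=a(a+1)\cdots(a+k-1)$ (Pochhammer symbol); $[z]_0=1$, $[z]_k=z(z-1)\cdots(z-k+1)$ (falling factorial). For a function $f$, $\Delta f(x)=f(x+1)-f(x)$, $\nabla f(x)=f(x)-f(x-1)$, $\Delta^0$ is the identity and $\Delta^k=\Delta\circ\Delta^{k-1}$. For $0\le n\le N$ the monic Kravchuk polynomial is $K_n(x)=p^n(-N)_n\sum_{k=0}^{n}\frac{(-n)_k(-x)_k}{(-N)_k\,k!}p^{-k}$, and $K_{-1}=0$; these are monic of degree $n$ and orthogonal on $\{0,\dots,N\}$ with respect to the binomial weight $w(x)=\binom{N}{x}p^x(1-p)^{N-x}$, with $\|K_n\|^2=\sum_{x=0}^N K_n(x)^2w(x)=n!(-N)_np^n(p-1)^n$. They satisfy $xK_n=K_{n+1}+\alpha_nK_n+\beta_nK_{n-1}$ with $\alpha_n=p(N-n)+n(1-p)$, $\beta_n=np(1-p)(N-n+1)$. For $1\le n\le N+1$ and integers $i,l\ge0$, $\mathscr K_{n-1}^{(i,l)}(x,y)=\sum_{k=0}^{n-1}\frac{\Delta^iK_k(x)\,\Delta^lK_k(y)}{\|K_k\|^2}$. Fix $\lambda,\mu>0$ and an integer $j\ge 0$. On real polynomials define $\langle f,g\rangle_{\lambda,\mu}=\sum_{x=0}^N f(x)g(x)w(x)+\lambda\Delta^jf(0)\Delta^jg(0)+\mu\Delta^jf(N)\Delta^jg(N)$. For $0\le n\le N$, $\mathbb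 K_n=\mathbb K_n^{(j)}$ is the monic polynomial of degree $n$ with $\langle\mathbb K_n,q\rangle_{\lambda,\mu}=0$ for all polynomials $q$ of degree $<n$ (Kravchuk–Sobolev polynomials). For $1\le n\le N$: $\mathscr A_n(x,y)=\frac{j!}{\|K_{n-1}\|^2[x-y]_{j+1}}\sum_{k=0}^{j}\frac{\Delta^kK_{n-1}(y)}{k!}[x-y]_k$, $\mathscr B_n(x,y)=-\frac{j!}{\|K_{n-1}\|^2[x-y]_{j+1}}\sum_{k=0}^{j}\frac{\Delta^kK_{n}(y)}{k!}[x-y]_k$; $k_{00}=\mathscr K^{(j,j)}_{n-1}(0,0)$, $k_{0N}=\mathscr K^{(j,j)}_{n-1}(0,N)$, $k_{N0}=\mathscr K^{(j,j)}_{n-1}(N,0)$, $k_{NN}=\mathscr K^{(j,j)}_{n-1}(N,N)$, $d_0=\Delta^jK_n(0)$, $d_N=\Delta^jK_n(N)$, $\delta_n=(1+\lambda k_{00})(1+\mu k_{NN})-\lambda\mu k_{0N}k_{N0}$ (which is nonzero), $\Phi_1(n)=\frac{d_0(1+\mu k_{NN})-\mu k_{0N}d_N}{\delta_n}$, $\Phi_2(n)=\frac{(1+\lambda k_{00})d_N-\lambda k_{N0}d_0}{\delta_n}$; $\mathscr C_{1,n}(x)=1-\lambda\Phi_1(n)\mathscr A_n(x,0)-\mu\Phi_2(n)\mathscr A_n(x,N)$ and $\mathscr D_{1,n}(x)=-\lambda\Phi_1(n)\mathscr B_n(x,0)-\mu\Phi_2(n)\mathscr B_n(x,N)$. For $2\le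 m\le N$ define $\mathscr E_{1,m}(x)=x\nabla\mathscr C_{1,m}(x)+m\,\mathscr C_{1,m}(x-1)-\frac{(m-1)p(N-m+2)\mathscr D_{1,m}(x-1)}{\beta_{m-1}}$ and $\mathscr F_{1,m}(x)=x\nabla\mathscr D_{1,m}(x)+mp(N-m+1)\mathscr C_{1,m}(x-1)+\frac{(m-1)p(N-m+2)(x-\alpha_{m-1})\mathscr D_{1,m}(x-1)}{\beta_{m-1}}+(m-1)\mathscr D_{1,m}(x-1)$. For $3\le n\le N$ define $\mathscr C_{2,n}(x)=-\frac{\mathscr D_{1,n-1}(x)}{\beta_{n-1}}$, $\mathscr D_{2,n}(x)=\mathscr C_{1,n-1}(x)+\mathscr C_{2,n}(x)(\alpha_{n-1}-x)$, $\mathscr E_{2,n}(x)=-\frac{\mathscr F_{1,n-1}(x)}{\beta_{n-1}}$, $\mathscr F_{2,n}(x)=\mathscr E_{1,n-1}(x)+\mathscr E_{2,n}(x)(\alpha_{n-1}-x)$, and $\Theta_n(x)=x\big(\mathscr C_{1,n}(x)\mathscr D_{2,n}(x)-\mathscr C_{2,n}(x)\mathscr D_{1,n}(x)\big)$, $\Lambda_n(x;i,k)=(-1)^k\big(\mathscr E_{k,n}(x)\mathscr D_{i,n}(x)-\mathscr F_{k,n}(x)\mathscr C_{i,n}(x)\big)$ for $i,k\in\{1,2\}$. *)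

theory Defs
  imports "HOL-Computational_Algebra.Polynomial"
begin

definition ffac :: "real \<Rightarrow> nat \<Rightarrow> real" where
  "ffac z k = (\<Prod>i<k. (z - real i))"

definition fdiff :: "(real \<Rightarrow> real) \<Rightarrow> real \<Rightarrow> real" where
  "fdiff f x = f (x + 1) - f x"

definition fdiffn :: "nat \<Rightarrow> (real \<Rightarrow> real) \<Rightarrow> real \<Rightarrow> real" where
  "fdiffn k f = (fdiff ^^ k) f"

definition bdiff :: "(real \<Rightarrow> real) \<Rightarrow> real \<Rightarrow> real" where
  "bdiff f x = f x - f (x - 1)"

definition wt :: "nat \<Rightarrow> real \<Rightarrow> nat \<Rightarrow> real" where
  "wt N p x = real (N choose x) * p ^ x * (1 - p) ^ (N - x)"

text \<open>Monic Kravchuk polynomial K_n (as a function of real x).\<close>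
definition Kr :: "nat \<Rightarrow> real \<Rightarrow> nat \<Rightarrow> real \<Rightarrow> real" where
  "Kr N p n x = p ^ n * pochhammer (- real N) n *
     (\<Sum>k\<le>n. pochhammer (- real n) k * pochhammer (- x) k
               / (pochhammer (- real N) k * fact k) * (1 / p) ^ k)"

definition Knorm :: "nat \<Rightarrow> real \<Rightarrow> nat \<Rightarrow> real" where
  "Knorm N p n = (\<Sum>x\<le>N. (Kr N p n (real x))\<^sup>2 * wt N p x)"

definition alpha :: "nat \<Rightarrow> real \<Rightarrow> nat \<Rightarrow> real" where
  "alpha N p n = p * (real N - real n) + real n * (1 - p)"

definition beta :: "nat \<Rightarrow> real \<Rightarrow> nat \<Rightarrow> real" where
  "beta N p n = real n * p * (1 - p) * (real N - real n + 1)"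

text \<open>Kernel: kern N p m i l x y = sum_{k=0}^{m} Delta^i K_k(x) Delta^l K_k(y) / ||K_k||^2.
  The paper's kernel with index n-1 is kern N p (n-1).\<close>
definition kern :: "nat \<Rightarrow> real \<Rightarrow> nat \<Rightarrow> nat \<Rightarrow> nat \<Rightarrow> real \<Rightarrow> real \<Rightarrow> real" where
  "kern N p m i l x y = (\<Sum>k\<le>m. fdiffn i (Kr N p k) x * fdiffn l (Kr N p k) y / Knorm N p k)"

definition sip :: "nat \<Rightarrow> real \<Rightarrow> real \<Rightarrow> real \<Rightarrow> nat \<Rightarrow>
    (real \<Rightarrow> real) \<Rightarrow> (real \<Rightarrow> real) \<Rightarrow> real" where
  "sip N p lam mu j f g =
     (\<Sum>x\<le>N. f (real x) * g (real x) * wt N p x)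
     + lam * fdiffn j f 0 * fdiffn j g 0
     + mu * fdiffn j f (real N) * fdiffn j g (real N)"

definition KSpoly :: "nat \<Rightarrow> real \<Rightarrow> real \<Rightarrow> real \<Rightarrow> nat \<Rightarrow> nat \<Rightarrow> real poly" where
  "KSpoly N p lam mu j n = (THE q. degree q = n \<and> lead_coeff q = 1 \<and>
      (\<forall>r. degree r < n \<longrightarrow> sip N p lam mu j (poly q) (poly r) = 0))"

definition KS :: "nat \<Rightarrow> real \<Rightarrow> real \<Rightarrow> real \<Rightarrow> nat \<Rightarrow> nat \<Rightarrow> real \<Rightarrow> real" where
  "KS N p lam mu j n = poly (KSpoly N p lam mu j n)"

definition An :: "nat \<Rightarrow> real \<Rightarrow> nat \<Rightarrow> nat \<Rightarrow> real \<Rightarrow> real \<Rightarrow> real" where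
  "An N p j n x y = fact j / (Knorm N p (n - 1) * ffac (x - y) (j + 1)) *
     (\<Sum>k\<le>j. fdiffn k (Kr N p (n - 1)) y / fact k * ffac (x - y) k)"

definition Bn :: "nat \<Rightarrow> real \<Rightarrow> nat \<Rightarrow> nat \<Rightarrow> real \<Rightarrow> real \<Rightarrow> real" where
  "Bn N p j n x y = - (fact j / (Knorm N p (n - 1) * ffac (x - y) (j + 1))) *
     (\<Sum>k\<le>j. fdiffn k (Kr N p n) y / fact k * ffac (x - y) k)"

definition deltan :: "nat \<Rightarrow> real \<Rightarrow> real \<Rightarrow> real \<Rightarrow> nat \<Rightarrow> nat \<Rightarrow> real" where
  "deltan N p lam mu j n =
     (1 + lam * kern N p (n - 1) j j 0 0) * (1 + mu * kern N p (n - 1) j j (real N) (real N))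
     - lam * mu * kern N p (n - 1) j j 0 (real N) * kern N p (n - 1) j j (real N) 0"

definition Phi1 :: "nat \<Rightarrow> real \<Rightarrow> real \<Rightarrow> real \<Rightarrow> nat \<Rightarrow> nat \<Rightarrow> real" where
  "Phi1 N p lam mu j n =
     (fdiffn j (Kr N p n) 0 * (1 + mu * kern N p (n - 1) j j (real N) (real N))
      - mu * kern N p (n - 1) j j 0 (real N) * fdiffn j (Kr N p n) (real N))
     / deltan N p lam mu j n"

definition Phi2 :: "nat \<Rightarrow> real \<Rightarrow> real \<Rightarrow> real \<Rightarrow> nat \<Rightarrow> nat \<Rightarrow> real" where
  "Phi2 N p lam mu j n =
     ((1 + lam * kern N p (n - 1) j j 0 0) * fdiffn j (Kr N p n) (real N)
      - lam * kern N p (n - 1) j j (real N) 0 * fdiffn j (Kr N p n) 0)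
     / deltan N p lam mu j n"

definition C1 :: "nat \<Rightarrow> real \<Rightarrow> real \<Rightarrow> real \<Rightarrow> nat \<Rightarrow> nat \<Rightarrow> real \<Rightarrow> real" where
  "C1 N p lam mu j n x = 1 - lam * Phi1 N p lam mu j n * An N p j n x 0
                           - mu * Phi2 N p lam mu j n * An N p j n x (real N)"

definition D1 :: "nat \<Rightarrow> real \<Rightarrow> real \<Rightarrow> real \<Rightarrow> nat \<Rightarrow> nat \<Rightarrow> real \<Rightarrow> real" where
  "D1 N p lam mu j n x = - lam * Phi1 N p lam mu j n * Bn N p j n x 0
                         - mu * Phi2 N p lam mu j n * Bn N p j n x (real N)"

definition E1 :: "nat \<Rightarrow> real \<Rightarrow> real \<Rightarrow> real \<Rightarrow> nat \<Rightarrow> nat \<Rightarrow> real \<Rightarrow> real" where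
  "E1 N p lam mu j m x = x * bdiff (C1 N p lam mu j m) x + real m * C1 N p lam mu j m (x - 1)
     - (real m - 1) * p * (real N - real m + 2) * D1 N p lam mu j m (x - 1) / beta N p (m - 1)"

definition F1 :: "nat \<Rightarrow> real \<Rightarrow> real \<Rightarrow> real \<Rightarrow> nat \<Rightarrow> nat \<Rightarrow> real \<Rightarrow> real" where
  "F1 N p lam mu j m x = x * bdiff (D1 N p lam mu j m) x
     + real m * p * (real N - real m + 1) * C1 N p lam mu j m (x - 1)
     + (real m - 1) * p * (real N - real m + 2) * (x - alpha N p (m - 1))
         * D1 N p lam mu j m (x - 1) / beta N p (m - 1)
     + (real m - 1) * D1 N p lam mu j m (x - 1)"

definition C2 :: "nat \<Rightarrow> real \<Rightarrow> real \<Rightarrow> real \<Rightarrow> nat \<Rightarrow> nat \<Rightarrow> real \<Rightarrow> real" where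
  "C2 N p lam mu j n x = - D1 N p lam mu j (n - 1) x / beta N p (n - 1)"

definition D2 :: "nat \<Rightarrow> real \<Rightarrow> real \<Rightarrow> real \<Rightarrow> nat \<Rightarrow> nat \<Rightarrow> real \<Rightarrow> real" where
  "D2 N p lam mu j n x = C1 N p lam mu j (n - 1) x + C2 N p lam mu j n x * (alpha N p (n - 1) - x)"

definition E2 :: "nat \<Rightarrow> real \<Rightarrow> real \<Rightarrow> real \<Rightarrow> nat \<Rightarrow> nat \<Rightarrow> real \<Rightarrow> real" where
  "E2 N p lam mu j n x = - F1 N p lam mu j (n - 1) x / beta N p (n - 1)"

definition F2 :: "nat \<Rightarrow> real \<Rightarrow> real \<Rightarrow> real \<Rightarrow> nat \<Rightarrow> nat \<Rightarrow> real \<Rightarrow> real" where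
  "F2 N p lam mu j n x = E1 N p lam mu j (n - 1) x + E2 N p lam mu j n x * (alpha N p (n - 1) - x)"

definition Cf :: "nat \<Rightarrow> nat \<Rightarrow> real \<Rightarrow> real \<Rightarrow> real \<Rightarrow> nat \<Rightarrow> nat \<Rightarrow> real \<Rightarrow> real" where
  "Cf i N p lam mu j n x = (if i = 1 then C1 N p lam mu j n x else C2 N p lam mu j n x)"
definition Df :: "nat \<Rightarrow> nat \<Rightarrow> real \<Rightarrow> real \<Rightarrow> real \<Rightarrow> nat \<Rightarrow> nat \<Rightarrow> real \<Rightarrow> real" where
  "Df i N p lam mu j n x = (if i = 1 then D1 N p lam mu j n x else D2 N p lam mu j n x)"
definition Ef :: "nat \<Rightarrow> nat \<Rightarrow> real \<Rightarrow> real \<Rightarrow> real \<Rightarrow> nat \<Rightarrow> nat \<Rightarrow> real \<Rightarrow> real" where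
  "Ef i N p lam mu j n x = (if i = 1 then E1 N p lam mu j n x else E2 N p lam mu j n x)"
definition Ff :: "nat \<Rightarrow> nat \<Rightarrow> real \<Rightarrow> real \<Rightarrow> real \<Rightarrow> nat \<Rightarrow> nat \<Rightarrow> real \<Rightarrow> real" where
  "Ff i N p lam mu j n x = (if i = 1 then F1 N p lam mu j n x else F2 N p lam mu j n x)"

definition Theta :: "nat \<Rightarrow> real \<Rightarrow> real \<Rightarrow> real \<Rightarrow> nat \<Rightarrow> nat \<Rightarrow> real \<Rightarrow> real" where
  "Theta N p lam mu j n x = x * (C1 N p lam mu j n x * D2 N p lam mu j n x
                                 - C2 N p lam mu j n x * D1 N p lam mu j n x)"

definition Lam :: "nat \<Rightarrow> real \<Rightarrow> real \<Rightarrow> real \<Rightarrow> nat \<Rightarrow> nat \<Rightarrow> real \<Rightarrow> nat \<Rightarrow> nat \<Rightarrow> real" where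
  "Lam N p lam mu j n x i k = (-1) ^ k *
     (Ef k N p lam mu j n x * Df i N p lam mu j n x - Ff k N p lam mu j n x * Cf i N p lam mu j n x)"

text \<open>The only denominators depending on x are [x]_{j+1} and [x-N]_{j+1} (from A_n(x,0),
  A_n(x,N), B_n(x,0), B_n(x,N)); a point is admissible if neither vanishes.
  Theta_n is defined at x iff x is admissible; Lambda_n(.;i,k) is defined at x iff
  x and x-1 are admissible.\<close>
definition admissible :: "nat \<Rightarrow> nat \<Rightarrow> real \<Rightarrow> bool" where
  "admissible N j x \<longleftrightarrow> ffac x (j + 1) \<noteq> 0 \<and> ffac (x - real N) (j + 1) \<noteq> 0"

end

theory Submission
  imports Defs
begin

definition cK :: "nat \<Rightarrow> real \<Rightarrow> nat \<Rightarrow> nat \<Rightarrow> real" where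
 "cK N p m k = p ^ m * pochhammer (- real N) m * (pochhammer (- real m) k / (pochhammer (- real N) k * fact k) * (1/p)^k)"

lemma Kr_cK: "Kr N p m x = (\<Sum>k\<le>m. cK N p m k * pochhammer (-x) k)"
  unfolding Kr_def cK_def sum_distrib_left by (simp add: ac_simps)

lemma cK_zero: "m < k \<Longrightarrow> cK N p m k = 0"
  unfolding cK_def by (simp add: pochhammer_of_nat_eq_0_iff)

lemma Kr_ext: "m \<le> M \<Longrightarrow> Kr N p m x = (\<Sum>k\<le>M. cK N p m k * pochhammer (-x) k)"
  unfolding Kr_cK by (rule sum.mono_neutral_left) (auto simp: cK_zero)

lemma rec_alg:
  fixes P H A D q p n N i :: real
  assumes "D \<noteq> 0" "p \<noteq> 0" "n \<noteq> 0"
  shows "(i+1) * (p*P * ((-N+n-1)*H) * ((-n+i)*A / D * ((1/p)*q)))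
     - p*P*((-N+n-1)*H) * (A*(-N+i)*(i+1)/D * q)
   = (p*(p*P))*((-N+n)*((-N+n-1)*H)) * ((-n-1)*A/D * ((1/p)*q))
     + (p * (N - n) + n * (1 - p)) * (p*P * ((-N+n-1)*H) * ((-n+i)*A / D * ((1/p)*q)))
     + (n * p * (1 - p) * (N - n + 1)) * (P*H* ((A*(-n+i)*(-n+i+1)/(-n)) / D * ((1/p)*q)))"
  using assms by (simp add: field_simps)

lemma rec_coef:
  assumes p: "p \<noteq> 0" and mN: "Suc (Suc m) \<le> N"
  shows "real k * cK N p (Suc m) k - (if k = 0 then 0 else cK N p (Suc m) (k-1))
       = cK N p (Suc (Suc m)) k + alpha N p (Suc m) * cK N p (Suc m) k + beta N p (Suc m) * cK N p m k"
proof (cases "Suc (Suc m) < k")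
  case True
  then show ?thesis by (simp add: cK_zero)
next
  case False
  show ?thesis
  proof (cases k)
    case 0
    have h1: "pochhammer (- real N) (Suc m) = (- real N + real m) * pochhammer (- real N) m"
      by (simp add: pochhammer_rec')
    have h2: "pochhammer (- real N) (Suc (Suc m)) = (- real N + real m + 1) * ((- real N + real m) * pochhammer (- real N) m)"
      by (simp only: pochhammer_rec') (simp add: algebra_simps)
    show ?thesis using 0 p unfolding cK_def alpha_def beta_def
      by (simp add: h1 h2 del: pochhammer_Suc) (simp add: field_simps)
  next
    case (Suc i)
    with False have iN: "i \<le> Suc m" by simp
    define n where "n = real (Suc m)"
    define A where "A = pochhammer (- n) i"
    define F where "F = pochhammer (- real N) i"
    define H where "H = pochhammer (- real N) m"
    define P where "P = p ^ m"
    define q where "q = (1/p) ^ i"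
    define D where "D = (- real N + real i) * F * ((real i + 1) * fact i)"
    have F0: "F \<noteq> 0" unfolding F_def using iN mN by (simp add: pochhammer_of_nat_eq_0_iff)
    have Ni: "- real N + real i \<noteq> 0" using iN mN by simp
    have D0: "D \<noteq> 0" unfolding D_def using F0 Ni by simp
    have n0: "n \<noteq> 0" unfolding n_def by simp
    have e1: "cK N p (Suc m) (Suc i) = p*P*((-real N+n-1)*H)*((-n+real i)*A/D*((1/p)*q))"
      unfolding cK_def n_def A_def F_def H_def P_def q_def D_def
      by (simp only: pochhammer_rec') (simp add: algebra_simps)
    have e2: "cK N p (Suc m) i = p*P*((-real N+n-1)*H)*(A*(-real N+real i)*(real i+1)/D*q)"
    proof -
      have c0: "(-real N + real i)*(real i + 1) \<noteq> 0" using Ni by simp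
      have "A*(-real N+real i)*(real i+1)/D = ((-real N + real i)*(real i + 1)*A)/((-real N + real i)*(real i + 1)*(F*fact i))"
        by (simp add: D_def ac_simps)
      also have "\<dots> = A/(F*fact i)" by (rule nonzero_mult_divide_mult_cancel_left[OF c0])
      finally have "A/(F*fact i) = A*(-real N+real i)*(real i+1)/D" by simp
      moreover have "cK N p (Suc m) i = p*P*((-real N+n-1)*H)*(A/(F*fact i)*q)"
        unfolding cK_def n_def A_def F_def H_def P_def q_def by (simp only: pochhammer_rec') (simp add: algebra_simps)
      ultimately show ?thesis by simp
    qed
    have e3: "cK N p (Suc (Suc m)) (Suc i) = (p*(p*P))*((-real N+n)*((-real N+n-1)*H))*((-n-1)*A/D*((1/p)*q))"
    proof -
      have "pochhammer (- real (Suc (Suc m))) (Suc i) = (-n-1) * A"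
        unfolding A_def n_def by (simp only: pochhammer_rec) (simp add: algebra_simps)
      moreover have "pochhammer (- real N) (Suc (Suc m)) = (-real N+n)*((-real N+n-1)*H)"
        unfolding H_def n_def by (simp only: pochhammer_rec') (simp add: algebra_simps)
      ultimately show ?thesis
        unfolding cK_def D_def F_def P_def q_def
        by (simp only: pochhammer_rec') (simp add: algebra_simps)
    qed
    have e4: "cK N p m (Suc i) = P*H*((A*(-n+real i)*(-n+real i+1)/(-n))/D*((1/p)*q))"
    proof -
      have a: "pochhammer (- n) (Suc (Suc i)) = (-n) * pochhammer (- real m) (Suc i)"
        unfolding n_def by (subst pochhammer_rec) (simp add: algebra_simps)
      have b: "pochhammer (- n) (Suc (Suc i)) = A*(-n+real i)*(-n+real i+1)"
        unfolding A_def by (simp only: pochhammer_rec') (simp add: algebra_simps)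
      have "pochhammer (- real m) (Suc i) = A*(-n+real i)*(-n+real i+1)/(-n)"
        using a b n0 by (simp add: field_simps)
      then show ?thesis
        unfolding cK_def D_def F_def P_def q_def H_def
        by (simp only: pochhammer_rec') (simp add: algebra_simps)
    qed
    have al: "alpha N p (Suc m) = p * (real N - n) + n * (1 - p)" unfolding alpha_def n_def by simp
    have be: "beta N p (Suc m) = n * p * (1 - p) * (real N - n + 1)" unfolding beta_def n_def by simp
    have R: "(real i+1) * (p*P * ((-real N+n-1)*H) * ((-n+real i)*A / D * ((1/p)*q)))
     - p*P*((-real N+n-1)*H) * (A*(-real N+real i)*(real i+1)/D * q)
   = (p*(p*P))*((-real N+n)*((-real N+n-1)*H)) * ((-n-1)*A/D * ((1/p)*q))
     + (p * (real N - n) + n * (1 - p)) * (p*P * ((-real N+n-1)*H) * ((-n+real i)*A / D * ((1/p)*q)))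
     + (n * p * (1 - p) * (real N - n + 1)) * (P*H* ((A*(-n+real i)*(-n+real i+1)/(-n)) / D * ((1/p)*q)))"
      by (rule rec_alg[OF D0 p n0])
    have ri: "real (Suc i) = real i + 1" by simp
    show ?thesis unfolding Suc using R
      by (simp only: e1 e2 e3 e4 al be ri diff_Suc_1 nat.distinct(2) if_False)
  qed
qed

lemma poch_x: "x * pochhammer (-x) k = real k * pochhammer (-x) k - pochhammer (-x) (Suc k)"
  by (simp add: pochhammer_rec' algebra_simps)

lemma Kr_rec:
  assumes p: "p \<noteq> 0" and mN: "Suc (Suc m) \<le> N"
  shows "x * Kr N p (Suc m) x = Kr N p (Suc (Suc m)) x + alpha N p (Suc m) * Kr N p (Suc m) x
          + beta N p (Suc m) * Kr N p m x"
proof -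
  let ?M = "Suc (Suc m)"
  let ?P = "\<lambda>k. pochhammer (-x) k"
  have s2: "(\<Sum>k\<le>?M. (if k = 0 then 0 else cK N p (Suc m) (k-1)) * ?P k) = (\<Sum>k\<le>Suc m. cK N p (Suc m) k * ?P (Suc k))"
    by (subst sum.atMost_Suc_shift) simp
  have s1: "(\<Sum>k\<le>?M. real k * cK N p (Suc m) k * ?P k) = (\<Sum>k\<le>Suc m. real k * cK N p (Suc m) k * ?P k)"
    by (simp add: cK_zero)
  have "x * Kr N p (Suc m) x = (\<Sum>k\<le>Suc m. cK N p (Suc m) k * (real k * ?P k - ?P (Suc k)))"
    unfolding Kr_cK sum_distrib_left by (rule sum.cong) (auto simp: poch_x[symmetric] ac_simps)
  also have "\<dots> = (\<Sum>k\<le>?M. (real k * cK N p (Suc m) k - (if k = 0 then 0 else cK N p (Suc m) (k-1))) * ?P k)"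
    unfolding left_diff_distrib sum_subtractf s2 s1 by (simp add: algebra_simps sum_subtractf)
  also have "\<dots> = (\<Sum>k\<le>?M. (cK N p (Suc (Suc m)) k + alpha N p (Suc m) * cK N p (Suc m) k + beta N p (Suc m) * cK N p m k) * ?P k)"
    using rec_coef[OF p mN] by simp
  also have "\<dots> = Kr N p (Suc (Suc m)) x + alpha N p (Suc m) * Kr N p (Suc m) x + beta N p (Suc m) * Kr N p m x"
    by (simp add: Kr_ext[of "Suc m" ?M] Kr_ext[of m ?M] Kr_cK[of N p ?M] sum.distrib sum_distrib_left algebra_simps)
  finally show ?thesis .
qed

lemma Kr_0[simp]: "Kr N p 0 x = 1"
  unfolding Kr_def by simp

lemma Kr_1: "p \<noteq> 0 \<Longrightarrow> 1 \<le> N \<Longrightarrow> Kr N p (Suc 0) x = x - p * real N"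
  unfolding Kr_def by (simp add: field_simps atMost_Suc)

lemma Kr_rec0: "p \<noteq> 0 \<Longrightarrow> 1 \<le> N \<Longrightarrow> x * Kr N p 0 x = Kr N p (Suc 0) x + alpha N p 0 * Kr N p 0 x"
  by (simp add: Kr_1 alpha_def)

lemma poch_nabla: "x * (pochhammer (-x) k - pochhammer (-(x-1)) k) = real k * pochhammer (-x) k"
proof (cases k)
  case (Suc i)
  have a: "pochhammer (-x) (Suc i) = (-x) * pochhammer (-x+1) i" by (simp only: pochhammer_rec)
  have b: "pochhammer (-(x-1)) (Suc i) = (-x+1+real i) * pochhammer (-x+1) i" by (simp only: pochhammer_rec') simp
  show ?thesis unfolding Suc a b by (simp add: algebra_simps)
qed simp

lemma struct_coef: "(real k - real (Suc l)) * cK N p (Suc l) k = real (Suc l) * p * (real N - real l) * cK N p l k"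
proof -
  have a: "(- real (Suc l) + real k) * pochhammer (- real (Suc l)) k = (- real (Suc l)) * pochhammer (- real l) k"
  proof -
    have "pochhammer (- real (Suc l)) (Suc k) = (- real (Suc l)) * pochhammer (- real l) k"
      by (simp only: pochhammer_rec) simp
    moreover have "pochhammer (- real (Suc l)) (Suc k) = (- real (Suc l) + real k) * pochhammer (- real (Suc l)) k"
      by (simp only: pochhammer_rec')
    ultimately show ?thesis by simp
  qed
  have b: "pochhammer (- real N) (Suc l) = (- real N + real l) * pochhammer (- real N) l"
    by (simp only: pochhammer_rec')
  have "(real k - real (Suc l)) * cK N p (Suc l) k = p^Suc l * pochhammer (- real N) (Suc l) *
     (((- real (Suc l) + real k) * pochhammer (- real (Suc l)) k) / (pochhammer (- real N) k * fact k) * (1/p)^k)"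
    unfolding cK_def by (simp add: algebra_simps)
  also have "\<dots> = real (Suc l) * p * (real N - real l) * cK N p l k"
    unfolding a b cK_def by (simp add: algebra_simps)
  finally show ?thesis .
qed

lemma sum_lin2: fixes a b :: real shows "(\<Sum>k\<in>A. (a * f k + b * g k) * P k) = a * (\<Sum>k\<in>A. f k * P k) + b * (\<Sum>k\<in>A. g k * P k)"
  by (simp add: sum.distrib sum_distrib_left ring_distribs mult.assoc)

lemma Kr_struct:
  "x * (Kr N p (Suc l) x - Kr N p (Suc l) (x - 1)) = real (Suc l) * Kr N p (Suc l) x + real (Suc l) * p * (real N - real l) * Kr N p l x"
proof -
  have "x * (Kr N p (Suc l) x - Kr N p (Suc l) (x - 1)) = (\<Sum>k\<le>Suc l. cK N p (Suc l) k * (real k * pochhammer (-x) k))"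
    unfolding Kr_cK sum_distrib_left sum_subtractf[symmetric]
    by (rule sum.cong) (auto simp: poch_nabla[symmetric] algebra_simps)
  also have "\<dots> = (\<Sum>k\<le>Suc l. (real (Suc l) * cK N p (Suc l) k + real (Suc l) * p * (real N - real l) * cK N p l k) * pochhammer (-x) k)"
  proof (rule sum.cong[OF refl])
    fix k
    have "real k * cK N p (Suc l) k = real (Suc l) * cK N p (Suc l) k + real (Suc l) * p * (real N - real l) * cK N p l k"
      using struct_coef[of k l N p] by (simp add: algebra_simps)
    then have "(real k * cK N p (Suc l) k) * pochhammer (- x) k =
         (real (Suc l) * cK N p (Suc l) k + real (Suc l) * p * (real N - real l) * cK N p l k) * pochhammer (- x) k"
      by (simp only:)
    then show "cK N p (Suc l) k * (real k * pochhammer (- x) k) =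
         (real (Suc l) * cK N p (Suc l) k + real (Suc l) * p * (real N - real l) * cK N p l k) * pochhammer (- x) k"
      by (simp only: ac_simps)
  qed
  also have "\<dots> = real (Suc l) * Kr N p (Suc l) x + real (Suc l) * p * (real N - real l) * Kr N p l x"
  proof -
    have e: "Kr N p l x = (\<Sum>k\<le>Suc l. cK N p l k * pochhammer (-x) k)" by (rule Kr_ext) simp
    show ?thesis unfolding sum_lin2 e Kr_cK[of N p "Suc l"] ..
  qed
  finally show ?thesis .
qed

definition Lop :: "nat \<Rightarrow> real \<Rightarrow> (real \<Rightarrow> real) \<Rightarrow> real \<Rightarrow> real" where
  "Lop N p f x = p * (real N - x) * (f (x + 1) - f x) - (1 - p) * x * (f x - f (x - 1))"

lemma Lop_poch: "Lop N p (\<lambda>y. pochhammer (-y) k) x =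
   - real k * pochhammer (-x) k - (if k = 0 then 0 else p * real k * (real N - real k + 1) * pochhammer (-x) (k - 1))"
proof (cases k)
  case 0 then show ?thesis by (simp add: Lop_def)
next
  case (Suc i)
  have a: "pochhammer (-(x+1)) (Suc i) - pochhammer (-x) (Suc i) = - (real i + 1) * pochhammer (-x) i"
  proof -
    have "pochhammer (-(x+1)) (Suc i) = (-x-1) * pochhammer (-x) i" by (simp only: pochhammer_rec) simp
    moreover have "pochhammer (-x) (Suc i) = (-x + real i) * pochhammer (-x) i" by (simp only: pochhammer_rec')
    ultimately show ?thesis by (simp add: algebra_simps)
  qed
  have b: "(real N - x) * pochhammer (-x) i = (real N - real i) * pochhammer (-x) i + pochhammer (-x) (Suc i)"
    by (simp only: pochhammer_rec') (simp add: algebra_simps)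
  have c: "x * (pochhammer (-x) (Suc i) - pochhammer (-(x-1)) (Suc i)) = real (Suc i) * pochhammer (-x) (Suc i)"
    by (rule poch_nabla)
  have "Lop N p (\<lambda>y. pochhammer (-y) k) x = p * ((real N - x) * (pochhammer (-(x+1)) (Suc i) - pochhammer (-x) (Suc i)))
       - (1 - p) * (x * (pochhammer (-x) (Suc i) - pochhammer (-(x-1)) (Suc i)))"
    unfolding Lop_def Suc by (simp add: algebra_simps)
  also have "\<dots> = p * (- (real i + 1) * ((real N - x) * pochhammer (-x) i)) - (1 - p) * (real (Suc i) * pochhammer (-x) (Suc i))"
    unfolding a c by (simp add: algebra_simps)
  also have "\<dots> = - real k * pochhammer (-x) k - (if k = 0 then 0 else p * real k * (real N - real k + 1) * pochhammer (-x) (k - 1))"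
    unfolding b Suc by (simp add: algebra_simps)
  finally show ?thesis .
qed

lemma alg1: fixes a b p m c :: real shows "a \<noteq> 0 \<Longrightarrow> b \<noteq> 0 \<Longrightarrow> p \<noteq> 0 \<Longrightarrow> (p*b)*(-a)*(c*(m/(a*b*p))) = -m*c"
  by (simp add: field_simps)

lemma de_coef:
  assumes "p \<noteq> 0" "n \<le> N" "k \<le> n"
  shows "p * real (Suc k) * (real N - real k) * cK N p n (Suc k) = (real n - real k) * cK N p n k"
proof (cases "k = N")
  case True
  with assms have "n = k" by simp
  with True show ?thesis by simp
next
  case False
  with assms have Nk: "- real N + real k \<noteq> 0" by simp
  have F0: "pochhammer (- real N) k \<noteq> 0" using False assms by (simp add: pochhammer_of_nat_eq_0_iff)
  have k1: "real k + 1 \<noteq> 0" by simp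
  have r: "cK N p n (Suc k) = cK N p n k * ((- real n + real k) / ((- real N + real k) * (real k + 1) * p))"
  proof -
    have "cK N p n (Suc k) = p ^ n * pochhammer (- real N) n * ((- real n + real k) * pochhammer (- real n) k /
         (((- real N + real k) * pochhammer (- real N) k) * ((real k + 1) * fact k)) * ((1/p) * (1/p)^k))"
      unfolding cK_def by (simp only: pochhammer_rec' fact_Suc power_Suc) simp
    then show ?thesis unfolding cK_def using Nk F0 k1 assms(1) by (simp add: field_simps)
  qed
  have "p * real (Suc k) * (real N - real k) * cK N p n (Suc k)
     = (p * (real k + 1)) * (- (- real N + real k)) * (cK N p n k * ((- real n + real k) / ((- real N + real k) * (real k + 1) * p)))"
    unfolding r by (simp add: algebra_simps)
  also have "\<dots> = - (- real n + real k) * cK N p n k"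
    by (rule alg1[OF Nk k1 assms(1)])
  finally show ?thesis by simp
qed

lemma Lop_Kr:
  assumes p: "p \<noteq> 0" and nN: "n \<le> N"
  shows "Lop N p (Kr N p n) x = - real n * Kr N p n x"
proof -
  let ?P = "\<lambda>k. pochhammer (-x) k"
  let ?c = "cK N p n"
  have lin: "Lop N p (Kr N p n) x = (\<Sum>k\<le>n. ?c k * Lop N p (\<lambda>y. pochhammer (-y) k) x)"
    unfolding Lop_def Kr_cK sum_distrib_left sum_subtractf[symmetric] by (rule sum.cong) (auto simp: algebra_simps)
  have sh: "(\<Sum>k\<le>n. ?c k * (if k = 0 then 0 else p * real k * (real N - real k + 1) * ?P (k - 1)))
      = (\<Sum>k\<le>n. ?c (Suc k) * (p * real (Suc k) * (real N - real k)) * ?P k)"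
  proof -
    have "(\<Sum>k\<le>n. ?c k * (if k = 0 then 0 else p * real k * (real N - real k + 1) * ?P (k - 1)))
      = (\<Sum>k\<le>Suc n. ?c k * (if k = 0 then 0 else p * real k * (real N - real k + 1) * ?P (k - 1)))"
      by (simp add: cK_zero)
    also have "\<dots> = (\<Sum>k\<le>n. ?c (Suc k) * (p * real (Suc k) * (real N - real k)) * ?P k)"
      by (subst sum.atMost_Suc_shift) (simp add: algebra_simps)
    finally show ?thesis .
  qed
  have "Lop N p (Kr N p n) x = (\<Sum>k\<le>n. (- real k * ?c k - p * real (Suc k) * (real N - real k) * ?c (Suc k)) * ?P k)"
    unfolding lin Lop_poch right_diff_distrib sum_subtractf sh
    by (simp add: sum_subtractf[symmetric] algebra_simps)
  also have "\<dots> = (\<Sum>k\<le>n. (- real n * ?c k) * ?P k)"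
  proof (rule sum.cong[OF refl])
    fix k assume "k \<in> {..n}"
    then have d: "p * real (Suc k) * (real N - real k) * ?c (Suc k) = (real n - real k) * ?c k"
      using de_coef[OF p nN] by simp
    have "- real k * ?c k - p * real (Suc k) * (real N - real k) * ?c (Suc k) = - real k * ?c k - (real n - real k) * ?c k"
      by (simp only: d)
    also have "\<dots> = - real n * ?c k" by (simp add: algebra_simps)
    finally show "(- real k * ?c k - p * real (Suc k) * (real N - real k) * ?c (Suc k)) * ?P k = (- real n * ?c k) * ?P k"
      by (simp only:)
  qed
  also have "\<dots> = - real n * Kr N p n x"
    unfolding Kr_cK sum_distrib_left by (simp add: ac_simps)
  finally show ?thesis .
qed

definition ip :: "nat \<Rightarrow> real \<Rightarrow> (real \<Rightarrow> real) \<Rightarrow> (real \<Rightarrow> real) \<Rightarrow> real" where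
  "ip N p f g = (\<Sum>x\<le>N. f (real x) * g (real x) * wt N p x)"

lemma Knorm_ip: "Knorm N p k = ip N p (Kr N p k) (Kr N p k)"
  unfolding Knorm_def ip_def by (simp add: power2_eq_square)

lemma ip_sym: "ip N p f g = ip N p g f"
  unfolding ip_def by (simp add: ac_simps)

lemma wt_balance:
  assumes "x < N"
  shows "wt N p x * p * (real N - real x) = wt N p (Suc x) * (1 - p) * real (Suc x)"
proof -
  have b: "(N - x) * (N choose x) = Suc x * (N choose Suc x)"
    using binomial_absorb_comp[of N x] binomial_absorption[of x N] by simp
  have b': "real (N choose x) * (real N - real x) = real (N choose Suc x) * real (Suc x)"
  proof -
    have "real ((N - x) * (N choose x)) = real (Suc x * (N choose Suc x))" using b by simp
    then show ?thesis using assms by (simp add: of_nat_diff algebra_simps)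
  qed
  have e: "N - x = Suc (N - Suc x)" using assms by simp
  have "wt N p x * p * (real N - real x) = (real (N choose x) * (real N - real x)) * (p^x*p) * ((1-p)^(N - Suc x)*(1-p))"
    unfolding wt_def e by (simp add: ac_simps)
  also have "\<dots> = (real (N choose Suc x) * real (Suc x)) * (p^x*p) * ((1-p)^(N - Suc x)*(1-p))"
    by (simp only: b')
  also have "\<dots> = wt N p (Suc x) * (1 - p) * real (Suc x)"
    unfolding wt_def by (simp add: ac_simps)
  finally show ?thesis .
qed

lemma Lop_sa:
  "(\<Sum>x\<le>N. wt N p x * Lop N p f (real x) * g (real x))
   = - (\<Sum>x<N. wt N p x * p * (real N - real x) * (f (real x + 1) - f (real x)) * (g (real x + 1) - g (real x)))"
proof -
  let ?a = "\<lambda>x. wt N p x * p * (real N - real x)"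
  have T1: "(\<Sum>x\<le>N. wt N p x * (p * (real N - real x) * (f (real x + 1) - f (real x))) * g (real x))
      = (\<Sum>x<N. ?a x * (f (real x + 1) - f (real x)) * g (real x))"
    unfolding lessThan_Suc_atMost[symmetric] by (simp add: algebra_simps)
  have T2: "(\<Sum>x\<le>N. wt N p x * ((1 - p) * real x * (f (real x) - f (real x - 1))) * g (real x))
      = (\<Sum>x<N. ?a x * (f (real x + 1) - f (real x)) * g (real x + 1))"
  proof -
    have "(\<Sum>x\<le>N. wt N p x * ((1 - p) * real x * (f (real x) - f (real x - 1))) * g (real x))
       = (\<Sum>x<N. wt N p (Suc x) * ((1 - p) * real (Suc x) * (f (real (Suc x)) - f (real (Suc x) - 1))) * g (real (Suc x)))"
      unfolding lessThan_Suc_atMost[symmetric] sum.lessThan_Suc_shift by simp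
    also have "\<dots> = (\<Sum>x<N. ?a x * (f (real x + 1) - f (real x)) * g (real x + 1))"
    proof (rule sum.cong[OF refl])
      fix x assume "x \<in> {..<N}"
      then have w: "wt N p (Suc x) * (1 - p) * real (Suc x) = ?a x" using wt_balance by simp
      have "wt N p (Suc x) * ((1 - p) * real (Suc x) * (f (real (Suc x)) - f (real (Suc x) - 1))) * g (real (Suc x))
          = (wt N p (Suc x) * (1 - p) * real (Suc x)) * ((f (real x + 1) - f (real x)) * g (real x + 1))"
        by (simp add: algebra_simps)
      also have "\<dots> = ?a x * ((f (real x + 1) - f (real x)) * g (real x + 1))" by (simp only: w)
      finally show "wt N p (Suc x) * ((1 - p) * real (Suc x) * (f (real (Suc x)) - f (real (Suc x) - 1))) * g (real (Suc x))
          = ?a x * (f (real x + 1) - f (real x)) * g (real x + 1)"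
        by (simp only: mult.assoc)
    qed
    finally show ?thesis .
  qed
  have "(\<Sum>x\<le>N. wt N p x * Lop N p f (real x) * g (real x))
     = (\<Sum>x\<le>N. wt N p x * (p * (real N - real x) * (f (real x + 1) - f (real x))) * g (real x))
     - (\<Sum>x\<le>N. wt N p x * ((1 - p) * real x * (f (real x) - f (real x - 1))) * g (real x))"
    unfolding Lop_def sum_subtractf[symmetric] by (rule sum.cong) (auto simp: algebra_simps)
  also have "\<dots> = - (\<Sum>x<N. ?a x * (f (real x + 1) - f (real x)) * (g (real x + 1) - g (real x)))"
    unfolding T1 T2 sum_subtractf[symmetric] sum_negf[symmetric] by (rule sum.cong[OF refl]) (simp only: right_diff_distrib minus_diff_eq)
  finally show ?thesis .
qed

lemma Kr_ortho:
  assumes p: "p \<noteq> 0" and "n \<le> N" "m \<le> N" "n \<noteq> m"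
  shows "ip N p (Kr N p n) (Kr N p m) = 0"
proof -
  have "(\<Sum>x\<le>N. wt N p x * Lop N p (Kr N p n) (real x) * Kr N p m (real x)) = - real n * ip N p (Kr N p n) (Kr N p m)"
    unfolding ip_def Lop_Kr[OF p assms(2)] sum_distrib_left by (rule sum.cong) auto
  moreover have "(\<Sum>x\<le>N. wt N p x * Lop N p (Kr N p m) (real x) * Kr N p n (real x)) = - real m * ip N p (Kr N p n) (Kr N p m)"
    unfolding ip_def Lop_Kr[OF p assms(3)] sum_distrib_left by (rule sum.cong) auto
  moreover have "(\<Sum>x\<le>N. wt N p x * Lop N p (Kr N p n) (real x) * Kr N p m (real x)) =
       (\<Sum>x\<le>N. wt N p x * Lop N p (Kr N p m) (real x) * Kr N p n (real x))"
    unfolding Lop_sa by (simp add: ac_simps)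
  ultimately have "real n * ip N p (Kr N p n) (Kr N p m) = real m * ip N p (Kr N p n) (Kr N p m)" by linarith
  then have "(real n - real m) * ip N p (Kr N p n) (Kr N p m) = 0" by (simp add: left_diff_distrib)
  then show ?thesis using assms(4) by simp
qed

fun Pk :: "nat \<Rightarrow> real poly" where
  "Pk 0 = 1" | "Pk (Suc k) = Pk k * [: real k, -1 :]"

lemma poly_Pk: "poly (Pk k) x = pochhammer (-x) k"
  by (induction k) (simp_all add: pochhammer_rec' algebra_simps)

lemma Pk_deg: "degree (Pk k) = k \<and> lead_coeff (Pk k) = (-1)^k"
proof (induction k)
  case (Suc k)
  from Suc have d: "degree (Pk k) = k" and l: "lead_coeff (Pk k) = (-1)^k" by auto
  have "lead_coeff (Pk k) \<noteq> 0" using l by simp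
  then have nz1: "Pk k \<noteq> 0" by auto
  have nz2: "[: real k, -1 :] \<noteq> 0" by simp
  have "degree (Pk (Suc k)) = Suc k"
    by (simp only: Pk.simps(2) degree_mult_eq[OF nz1 nz2] d) simp
  moreover have "lead_coeff (Pk (Suc k)) = (-1)^Suc k"
    using lead_coeff_mult[of "Pk k" "[: real k, -1 :]"] unfolding Pk.simps(2) l by simp
  ultimately show ?case by simp
qed simp

lemma Pk_lead: "coeff (Pk k) k = (-1)^k"
  using Pk_deg[of k] by (metis)

definition Kpoly :: "nat \<Rightarrow> real \<Rightarrow> nat \<Rightarrow> real poly" where
  "Kpoly N p n = (\<Sum>k\<le>n. smult (cK N p n k) (Pk k))"

lemma poly_Kpoly: "poly (Kpoly N p n) x = Kr N p n x"
  unfolding Kpoly_def Kr_cK poly_sum by (simp add: poly_Pk)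

lemma Kpoly_deg_le: "degree (Kpoly N p n) \<le> n"
  unfolding Kpoly_def
  by (rule degree_sum_le) (auto intro: order.trans[OF degree_smult_le] simp: Pk_deg)

lemma cK_diag: "p \<noteq> 0 \<Longrightarrow> n \<le> N \<Longrightarrow> cK N p n n = (-1)^n"
proof -
  assume p: "p \<noteq> 0" and nN: "n \<le> N"
  have a: "pochhammer (- real n) n = (-1)^n * fact n"
    by (simp add: pochhammer_minus pochhammer_fact)
  have b: "pochhammer (- real N) n \<noteq> 0" using nN by (simp add: pochhammer_of_nat_eq_0_iff)
  have c: "p ^ n * (1/p)^n = 1" using p by (simp add: power_one_over field_simps)
  show ?thesis unfolding cK_def a using b c p
    by (simp add: field_simps power_one_over)
qed

lemma Kpoly_coeff_n: "p \<noteq> 0 \<Longrightarrow> n \<le> N \<Longrightarrow> coeff (Kpoly N p n) n = 1"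
proof -
  assume p: "p \<noteq> 0" and nN: "n \<le> N"
  have "coeff (Kpoly N p n) n = (\<Sum>k\<le>n. cK N p n k * coeff (Pk k) n)"
    unfolding Kpoly_def coeff_sum by simp
  also have "\<dots> = cK N p n n * coeff (Pk n) n"
    unfolding lessThan_Suc_atMost[symmetric] sum.lessThan_Suc by (simp add: coeff_eq_0 Pk_deg)
  also have "\<dots> = (-1)^n * (-1)^n" using Pk_lead[of n] cK_diag[OF p nN] by simp
  also have "\<dots> = 1" by (simp add: power_mult_distrib[symmetric])
  finally show ?thesis .
qed

lemma Kpoly_deg: "p \<noteq> 0 \<Longrightarrow> n \<le> N \<Longrightarrow> degree (Kpoly N p n) = n \<and> lead_coeff (Kpoly N p n) = 1"
  using Kpoly_coeff_n Kpoly_deg_le le_degree by (metis antisym one_neq_zero)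

lemma Kpoly_expand:
  assumes p: "p \<noteq> 0" and mN: "m \<le> N" and dr: "degree r \<le> m"
  shows "\<exists>c. r = (\<Sum>k\<le>m. smult (c k) (Kpoly N p k))"
  using mN dr
proof (induction m arbitrary: r)
  case 0
  then have "r = [: coeff r 0 :]" by (metis degree_0_id le_zero_eq)
  moreover have "Kpoly N p 0 = 1" unfolding Kpoly_def cK_def by simp
  ultimately show ?case by (intro exI[of _ "\<lambda>_. coeff r 0"]) (simp add: one_pCons)
next
  case (Suc m)
  define r' where "r' = r - smult (coeff r (Suc m)) (Kpoly N p (Suc m))"
  have "degree r' \<le> m"
  proof (rule degree_le, intro allI impI)
    fix i assume i: "m < i"
    show "coeff r' i = 0"
    proof (cases "i = Suc m")
      case True then show ?thesis unfolding r'_def using Kpoly_coeff_n[OF p Suc.prems(1)] by simp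
    next
      case False
      with i have "Suc m < i" by simp
      then have "coeff r i = 0" "coeff (Kpoly N p (Suc m)) i = 0"
        using Suc.prems(2) Kpoly_deg_le[of N p "Suc m"] by (auto intro: coeff_eq_0)
      then show ?thesis unfolding r'_def by simp
    qed
  qed
  then obtain c where c: "r' = (\<Sum>k\<le>m. smult (c k) (Kpoly N p k))" using Suc by auto
  define c' where "c' = c(Suc m := coeff r (Suc m))"
  have "r = (\<Sum>k\<le>m. smult (c' k) (Kpoly N p k)) + smult (c' (Suc m)) (Kpoly N p (Suc m))"
    using c unfolding r'_def c'_def by (simp add: algebra_simps)
  then show ?case by (intro exI[of _ c']) simp
qed

lemma ip_sum_right: "ip N p f (\<lambda>x. \<Sum>k\<in>A. c k * g k x) = (\<Sum>k\<in>A. c k * ip N p f (g k))"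
  unfolding ip_def sum_distrib_left sum_distrib_right
  by (subst sum.swap) (simp add: ac_simps)

lemma poly_sum_smult: "poly (\<Sum>k\<in>A. smult (c k) (q k)) x = (\<Sum>k\<in>A. c k * poly (q k) x)"
  by (simp add: poly_sum)

lemma Kr_ortho_low:
  assumes p: "p \<noteq> 0" and nN: "n \<le> N" and dr: "degree r < n"
  shows "ip N p (Kr N p n) (poly r) = 0"
proof -
  from dr have n1: "n \<ge> 1" by simp
  have a1: "n - 1 \<le> N" using nN by simp
  have a2: "degree r \<le> n - 1" using dr by simp
  obtain c where c: "r = (\<Sum>k\<le>n-1. smult (c k) (Kpoly N p k))"
    using Kpoly_expand[OF p a1 a2] by auto
  have "poly r = (\<lambda>x. \<Sum>k\<le>n-1. c k * Kr N p k x)"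
    unfolding c by (rule ext) (simp add: poly_sum poly_Kpoly)
  then have "ip N p (Kr N p n) (poly r) = (\<Sum>k\<le>n-1. c k * ip N p (Kr N p n) (Kr N p k))"
    by (simp add: ip_sum_right)
  also have "\<dots> = 0" using n1 nN by (intro sum.neutral) (auto simp: Kr_ortho[OF p])
  finally show ?thesis .
qed

lemma wt_pos: "0 < p \<Longrightarrow> p < 1 \<Longrightarrow> x \<le> N \<Longrightarrow> 0 < wt N p x"
  unfolding wt_def by simp

lemma Knorm_pos:
  assumes p0: "0 < p" and p1: "p < 1" and kN: "k \<le> N"
  shows "0 < Knorm N p k"
proof (rule ccontr)
  assume "\<not> 0 < Knorm N p k"
  moreover have "0 \<le> Knorm N p k" unfolding Knorm_def
    by (intro sum_nonneg mult_nonneg_nonneg) (auto intro: less_imp_le wt_pos[OF p0 p1])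
  ultimately have "Knorm N p k = 0" by simp
  have nn: "\<And>x. x \<in> {..N} \<Longrightarrow> 0 \<le> (Kr N p k (real x))\<^sup>2 * wt N p x"
    using wt_pos[OF p0 p1] by (simp add: less_imp_le)
  have "\<forall>x\<in>{..N}. (Kr N p k (real x))\<^sup>2 * wt N p x = 0"
    using sum_nonneg_eq_0_iff[OF finite_atMost nn] \<open>Knorm N p k = 0\<close> unfolding Knorm_def by simp
  then have z: "\<forall>x\<le>N. poly (Kpoly N p k) (real x) = 0"
  proof (intro allI impI)
    fix x assume "\<forall>x\<in>{..N}. (Kr N p k (real x))\<^sup>2 * wt N p x = 0" and x: "x \<le> N"
    then have "(Kr N p k (real x))\<^sup>2 * wt N p x = 0" by simp
    moreover have "wt N p x \<noteq> 0" using wt_pos[OF p0 p1 x] by simp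
    ultimately show "poly (Kpoly N p k) (real x) = 0" by (simp add: poly_Kpoly)
  qed
  have nz: "Kpoly N p k \<noteq> 0" using Kpoly_deg[of p k N] p0 kN by auto
  have "real ` {..N} \<subseteq> {x. poly (Kpoly N p k) x = 0}" using z by auto
  then have "card (real ` {..N}) \<le> card {x. poly (Kpoly N p k) x = 0}"
    by (intro card_mono poly_roots_finite nz)
  also have "\<dots> \<le> degree (Kpoly N p k)" by (rule card_poly_roots_bound[OF nz])
  also have "\<dots> = k" using Kpoly_deg[of p k N] p0 kN by auto
  finally have "card (real ` {..N}) \<le> k" .
  moreover have "card (real ` {..N}) = Suc N" by (subst card_image) (auto simp: inj_on_def)
  ultimately show False using kN by simp
qed

lemma Kr_rec_gen:
  assumes p: "p \<noteq> 0" and nN: "Suc n \<le> N"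
  shows "x * Kr N p n x = Kr N p (Suc n) x + alpha N p n * Kr N p n x + beta N p n * Kr N p (n - 1) x"
proof (cases n)
  case 0
  then show ?thesis using Kr_rec0[OF p, of N x] nN by (simp add: beta_def)
next
  case (Suc m)
  then show ?thesis using Kr_rec[OF p, of m N x] nN by simp
qed

lemma ip_lin3: "ip N p f (\<lambda>x. g1 x + a * g2 x + b * g3 x) = ip N p f g1 + a * ip N p f g2 + b * ip N p f g3"
  unfolding ip_def by (simp add: sum.distrib sum_distrib_left algebra_simps)

lemma Knorm_rec:
  assumes p0: "0 < p" and p1: "p < 1" and mN: "Suc (Suc m) \<le> N"
  shows "Knorm N p (Suc m) = beta N p (Suc m) * Knorm N p m"
proof -
  have p: "p \<noteq> 0" using p0 by simp
  have X: "(\<lambda>x. x * Kr N p m x) = (\<lambda>x. Kr N p (Suc m) x + alpha N p m * Kr N p m x + beta N p m * Kr N p (m - 1) x)"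
    using Kr_rec_gen[OF p] mN by auto
  have Y: "(\<lambda>x. x * Kr N p (Suc m) x) = (\<lambda>x. Kr N p (Suc (Suc m)) x + alpha N p (Suc m) * Kr N p (Suc m) x + beta N p (Suc m) * Kr N p m x)"
    using Kr_rec_gen[OF p] mN by auto
  have "ip N p (Kr N p (Suc m)) (\<lambda>x. x * Kr N p m x) = Knorm N p (Suc m)"
    unfolding X ip_lin3 Knorm_ip using mN by (simp add: Kr_ortho[OF p])
  moreover have "ip N p (Kr N p (Suc m)) (\<lambda>x. x * Kr N p m x) = ip N p (Kr N p m) (\<lambda>x. x * Kr N p (Suc m) x)"
    unfolding ip_def by (simp add: ac_simps)
  moreover have "ip N p (Kr N p m) (\<lambda>x. x * Kr N p (Suc m) x) = beta N p (Suc m) * Knorm N p m"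
    unfolding Y ip_lin3 Knorm_ip using mN by (simp add: Kr_ortho[OF p])
  ultimately show ?thesis by simp
qed

lemma beta_pos: "0 < p \<Longrightarrow> p < 1 \<Longrightarrow> 1 \<le> n \<Longrightarrow> n \<le> N \<Longrightarrow> 0 < beta N p n"
  unfolding beta_def by (intro mult_pos_pos) auto

lemma CD:
  assumes p0: "0 < p" and p1: "p < 1" and mN: "Suc m \<le> N"
  shows "(x - t) * (\<Sum>k\<le>m. Kr N p k x * Kr N p k t / Knorm N p k)
       = (Kr N p (Suc m) x * Kr N p m t - Kr N p m x * Kr N p (Suc m) t) / Knorm N p m"
  using mN
proof (induction m)
  case 0
  have p: "p \<noteq> 0" using p0 by simp
  show ?case using 0 by (simp add: Kr_1[OF p] field_simps)
next
  case (Suc m)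
  have p: "p \<noteq> 0" using p0 by simp
  have h0: "Knorm N p m \<noteq> 0" using Knorm_pos[OF p0 p1, of m N] Suc.prems by simp
  have b0: "beta N p (Suc m) \<noteq> 0" using beta_pos[OF p0 p1, of "Suc m" N] Suc by simp
  have h1: "Knorm N p (Suc m) = beta N p (Suc m) * Knorm N p m" using Knorm_rec[OF p0 p1] Suc by simp
  have rx: "x * Kr N p (Suc m) x = Kr N p (Suc (Suc m)) x + alpha N p (Suc m) * Kr N p (Suc m) x + beta N p (Suc m) * Kr N p m x"
    using Kr_rec_gen[OF p] Suc by simp
  have rt: "t * Kr N p (Suc m) t = Kr N p (Suc (Suc m)) t + alpha N p (Suc m) * Kr N p (Suc m) t + beta N p (Suc m) * Kr N p m t"
    using Kr_rec_gen[OF p] Suc by simp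
  have "(x - t) * (\<Sum>k\<le>Suc m. Kr N p k x * Kr N p k t / Knorm N p k)
     = (x - t) * (\<Sum>k\<le>m. Kr N p k x * Kr N p k t / Knorm N p k)
       + ((x * Kr N p (Suc m) x) * Kr N p (Suc m) t - Kr N p (Suc m) x * (t * Kr N p (Suc m) t)) / Knorm N p (Suc m)"
    by (simp add: algebra_simps add_divide_distrib diff_divide_distrib)
  also have "\<dots> = (Kr N p (Suc m) x * Kr N p m t - Kr N p m x * Kr N p (Suc m) t) / Knorm N p m
       + ((x * Kr N p (Suc m) x) * Kr N p (Suc m) t - Kr N p (Suc m) x * (t * Kr N p (Suc m) t)) / Knorm N p (Suc m)"
    using Suc by simp
  also have "\<dots> = (Kr N p (Suc (Suc m)) x * Kr N p (Suc m) t - Kr N p (Suc m) x * Kr N p (Suc (Suc m)) t) / Knorm N p (Suc m)"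
    unfolding rx rt h1 using h0 b0 by (simp add: field_simps)
  finally show ?case .
qed

lemma fdiffn_0[simp]: "fdiffn 0 f = f" unfolding fdiffn_def by simp
lemma fdiffn_Suc: "fdiffn (Suc j) f = fdiff (fdiffn j f)" unfolding fdiffn_def by simp
lemma fdiffn_Suc_pt: "fdiffn (Suc j) f t = fdiffn j f (t + 1) - fdiffn j f t"
  unfolding fdiffn_Suc fdiff_def ..

lemma fdiffn_sum: "fdiffn j (\<lambda>t. \<Sum>k\<in>A. c k * f k t) = (\<lambda>t. \<Sum>k\<in>A. c k * fdiffn j (f k) t)"
proof (induction j)
  case (Suc j)
  show ?case unfolding fdiffn_Suc Suc fdiff_def
    by (rule ext) (simp add: sum_subtractf[symmetric] right_diff_distrib)
qed simp

lemma fdiffn_lin: "fdiffn j (\<lambda>t. a * f t + b * g t) = (\<lambda>t. a * fdiffn j f t + b * fdiffn j g t)"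
proof (induction j)
  case (Suc j)
  show ?case unfolding fdiffn_Suc Suc fdiff_def
    by (rule ext) (simp add: algebra_simps)
qed simp

lemma fdiffn_cmult: "fdiffn j (\<lambda>t. a * f t) = (\<lambda>t. a * fdiffn j f t)"
  using fdiffn_lin[of j a f 0 f] by simp

lemma fdiffn_diff: "fdiffn j (\<lambda>t. f t - g t) = (\<lambda>t. fdiffn j f t - fdiffn j g t)"
  using fdiffn_lin[of j 1 f "-1" g] by simp

lemma leib1:
  assumes h: "\<And>t. (x - t) * S t = f t"
  shows "fdiffn j f t = (x - t - real j) * fdiffn j S t - real j * fdiffn (j - 1) S t"
proof (induction j arbitrary: t)
  case 0
  then show ?case using h by simp
next
  case (Suc j)
  have a: "fdiffn j S (t + 1) = fdiffn j S t + fdiffn (Suc j) S t" by (simp add: fdiffn_Suc_pt)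
  have b: "real j * fdiffn (j - 1) S (t + 1) = real j * (fdiffn (j - 1) S t + fdiffn j S t)"
    by (cases j) (simp_all add: fdiffn_Suc_pt)
  have "fdiffn (Suc j) f t = ((x - (t + 1) - real j) * fdiffn j S (t + 1) - real j * fdiffn (j - 1) S (t + 1))
       - ((x - t - real j) * fdiffn j S t - real j * fdiffn (j - 1) S t)"
    unfolding fdiffn_Suc_pt Suc[of "t+1"] Suc[of t] ..
  also have "\<dots> = (x - t - real (Suc j)) * fdiffn (Suc j) S t - real (Suc j) * fdiffn j S t"
    unfolding a b by (simp add: algebra_simps)
  finally show ?case by simp
qed

lemma ffac_Suc: "ffac z (Suc k) = ffac z k * (z - real k)"
  unfolding ffac_def by simp

lemma leib_alg:
  fixes D Dn f1 F z fj S j c :: real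
  assumes "F \<noteq> 0" "z \<noteq> 0" "c \<noteq> 0" "c = (j + 1) * fj"
    and "f1 = z * Dn - (j + 1) * D" and "D = fj / F * S"
  shows "Dn = c / (F * z) * (S + f1 / c * F)"
proof -
  have e: "(j+1) * D = c / F * S" using assms(4,6) by simp
  have "Dn = (f1 + (j+1) * D) / z" using assms(2,5) by (simp add: field_simps)
  then have "Dn = (f1 + c / F * S) / z" unfolding e .
  also have "\<dots> = (F * f1 + S * c) / (F * z)" using assms(1-3) by (simp add: field_simps)
  also have "\<dots> = c / (F * z) * (S + f1 / c * F)" using assms(1-3) by (simp add: field_simps)
  finally show ?thesis .
qed

lemma leibniz:
  assumes h: "\<And>t. (x - t) * S t = f t" and nz: "ffac (x - y) (Suc j) \<noteq> 0"
  shows "fdiffn j S y = fact j / ffac (x - y) (Suc j) * (\<Sum>k\<le>j. fdiffn k f y / fact k * ffac (x - y) k)"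
  using nz
proof (induction j)
  case 0
  then have "x - y \<noteq> 0" by (simp add: ffac_def)
  then show ?case using h[of y] by (simp add: ffac_def field_simps)
next
  case (Suc j)
  have F0: "ffac (x - y) (Suc j) \<noteq> 0" and z0: "x - y - real (Suc j) \<noteq> 0"
    using Suc.prems unfolding ffac_Suc[of _ "Suc j"] by auto
  have IH: "fdiffn j S y = fact j / ffac (x - y) (Suc j) * (\<Sum>k\<le>j. fdiffn k f y / fact k * ffac (x - y) k)"
    using Suc.IH[OF F0] .
  have L: "fdiffn (Suc j) f y = (x - y - real (Suc j)) * fdiffn (Suc j) S y - (real j + 1) * fdiffn j S y"
    using leib1[OF h, of "Suc j" y] by simp
  have "fdiffn (Suc j) S y = fact (Suc j) / (ffac (x - y) (Suc j) * (x - y - real (Suc j)))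
      * ((\<Sum>k\<le>j. fdiffn k f y / fact k * ffac (x - y) k) + fdiffn (Suc j) f y / fact (Suc j) * ffac (x - y) (Suc j))"
    by (rule leib_alg[OF F0 z0 _ _ L IH]) auto
  also have "\<dots> = fact (Suc j) / ffac (x - y) (Suc (Suc j)) * (\<Sum>k\<le>Suc j. fdiffn k f y / fact k * ffac (x - y) k)"
    by (simp add: ffac_Suc[of _ "Suc j"] algebra_simps)
  finally show ?case .
qed

lemma sum_alg2: fixes a b h :: real shows
  "(\<Sum>k\<in>A. (a * u k - b * v k) / h / fact k * F k) = a / h * (\<Sum>k\<in>A. u k / fact k * F k) - b / h * (\<Sum>k\<in>A. v k / fact k * F k)"
  unfolding sum_distrib_left sum_subtractf[symmetric] by (rule sum.cong[OF refl]) (simp add: divide_inverse algebra_simps)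

lemma kern_AB:
  assumes p0: "0 < p" and p1: "p < 1" and n1: "1 \<le> n" and nN: "n \<le> N"
    and nz: "ffac (x - y) (Suc j) \<noteq> 0"
  shows "kern N p (n - 1) 0 j x y = An N p j n x y * Kr N p n x + Bn N p j n x y * Kr N p (n - 1) x"
proof -
  obtain m where n: "n = Suc m" using n1 by (cases n) auto
  define S where "S = (\<lambda>t. \<Sum>k\<le>m. (Kr N p k x / Knorm N p k) * Kr N p k t)"
  define f where "f = (\<lambda>t. (Kr N p n x / Knorm N p m) * Kr N p m t + (- Kr N p m x / Knorm N p m) * Kr N p n t)"
  have h: "\<And>t. (x - t) * S t = f t"
  proof -
    fix t
    have "(x - t) * S t = (x - t) * (\<Sum>k\<le>m. Kr N p k x * Kr N p k t / Knorm N p k)"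
      unfolding S_def by (simp add: ac_simps)
    also have "\<dots> = (Kr N p (Suc m) x * Kr N p m t - Kr N p m x * Kr N p (Suc m) t) / Knorm N p m"
      by (rule CD[OF p0 p1]) (use nN n in simp)
    also have "\<dots> = f t" unfolding f_def n by (simp add: diff_divide_distrib)
    finally show "(x - t) * S t = f t" .
  qed
  have "kern N p (n - 1) 0 j x y = fdiffn j S y"
    unfolding kern_def S_def fdiffn_sum n by (simp add: ac_simps)
  also have "\<dots> = fact j / ffac (x - y) (Suc j) * (\<Sum>k\<le>j. fdiffn k f y / fact k * ffac (x - y) k)"
    by (rule leibniz[OF h nz])
  also have "\<dots> = fact j / ffac (x - y) (Suc j) * (\<Sum>k\<le>j. (Kr N p n x * fdiffn k (Kr N p m) y - Kr N p m x * fdiffn k (Kr N p n) y) / Knorm N p m / fact k * ffac (x - y) k)"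
    unfolding f_def fdiffn_lin by (simp add: diff_divide_distrib)
  also have "\<dots> = An N p j n x y * Kr N p n x + Bn N p j n x y * Kr N p (n - 1) x"
    unfolding sum_alg2 An_def Bn_def n by (simp add: algebra_simps)
  finally show ?thesis .
qed

lemma cs_double:
  fixes w s t :: "nat \<Rightarrow> real"
  shows "(\<Sum>k\<in>A. \<Sum>l\<in>A. w k * w l * (s k * t l - s l * t k)^2)
     = 2 * ((\<Sum>k\<in>A. w k * (s k)^2) * (\<Sum>k\<in>A. w k * (t k)^2) - (\<Sum>k\<in>A. w k * s k * t k)^2)"
proof -
  have e: "\<And>k l. w k * w l * (s k * t l - s l * t k)^2 =
      (w k * (s k)^2) * (w l * (t l)^2) + (w l * (s l)^2) * (w k * (t k)^2) - 2 * ((w k * s k * t k) * (w l * s l * t l))"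
    by (simp add: power2_eq_square algebra_simps)
  have s1: "(\<Sum>k\<in>A. \<Sum>l\<in>A. (w k * (s k)^2) * (w l * (t l)^2)) = (\<Sum>k\<in>A. w k * (s k)^2) * (\<Sum>k\<in>A. w k * (t k)^2)"
    by (simp add: sum_product)
  have s2: "(\<Sum>k\<in>A. \<Sum>l\<in>A. (w l * (s l)^2) * (w k * (t k)^2)) = (\<Sum>k\<in>A. w k * (s k)^2) * (\<Sum>k\<in>A. w k * (t k)^2)"
    by (subst sum.swap) (simp add: sum_product)
  have s3: "(\<Sum>k\<in>A. \<Sum>l\<in>A. (w k * s k * t k) * (w l * s l * t l)) = (\<Sum>k\<in>A. w k * s k * t k)^2"
    by (simp add: sum_product power2_eq_square)
  have g: "\<And>f g h :: nat \<Rightarrow> nat \<Rightarrow> real. (\<Sum>k\<in>A. \<Sum>l\<in>A. f k l + g k l - 2 * h k l)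
      = (\<Sum>k\<in>A. \<Sum>l\<in>A. f k l) + (\<Sum>k\<in>A. \<Sum>l\<in>A. g k l) - 2 * (\<Sum>k\<in>A. \<Sum>l\<in>A. h k l)"
    by (simp add: sum.distrib sum_subtractf sum_distrib_left)
  show ?thesis unfolding e g s1 s2 s3 by simp
qed

lemma cs_ineq:
  fixes w s t :: "nat \<Rightarrow> real"
  assumes "finite A" "\<And>k. k \<in> A \<Longrightarrow> 0 \<le> w k"
  shows "(\<Sum>k\<in>A. w k * s k * t k)^2 \<le> (\<Sum>k\<in>A. w k * (s k)^2) * (\<Sum>k\<in>A. w k * (t k)^2)"
proof -
  have "0 \<le> (\<Sum>k\<in>A. \<Sum>l\<in>A. w k * w l * (s k * t l - s l * t k)^2)"
    using assms by (intro sum_nonneg mult_nonneg_nonneg) auto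
  then show ?thesis unfolding cs_double by simp
qed

definition Gp :: "nat \<Rightarrow> real \<Rightarrow> nat \<Rightarrow> nat \<Rightarrow> real \<Rightarrow> real poly" where
  "Gp N p j n y = (\<Sum>k\<le>n-1. smult (fdiffn j (Kr N p k) y / Knorm N p k) (Kpoly N p k))"

lemma poly_Gp_fun: "poly (Gp N p j n y) = (\<lambda>x. \<Sum>k\<le>n-1. (fdiffn j (Kr N p k) y / Knorm N p k) * Kr N p k x)"
  unfolding Gp_def by (rule ext) (simp add: poly_sum poly_Kpoly)

lemma poly_Gp: "poly (Gp N p j n y) x = kern N p (n-1) 0 j x y"
  unfolding poly_Gp_fun kern_def by (simp add: ac_simps)

lemma fdiffn_Gp: "fdiffn j (poly (Gp N p j n z)) y = kern N p (n-1) j j y z"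
  unfolding poly_Gp_fun fdiffn_sum kern_def by (simp add: ac_simps)

lemma deg_Gp: "degree (Gp N p j n y) \<le> n - 1"
  unfolding Gp_def
  by (rule degree_sum_le) (auto intro: order.trans[OF degree_smult_le] order.trans[OF Kpoly_deg_le])

lemma ip_sum_left: "ip N p (\<lambda>x. \<Sum>k\<in>A. c k * g k x) f = (\<Sum>k\<in>A. c k * ip N p (g k) f)"
  unfolding ip_def sum_distrib_left sum_distrib_right
  by (subst sum.swap) (simp add: ac_simps)

lemma ip_Gp:
  assumes p0: "0 < p" and p1: "p < 1" and nN: "n \<le> N" and dr: "degree r < n"
  shows "ip N p (poly (Gp N p j n y)) (poly r) = fdiffn j (poly r) y"
proof -
  have p: "p \<noteq> 0" using p0 by simp
  have a1: "n - 1 \<le> N" using nN by simp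
  have a2: "degree r \<le> n - 1" using dr by simp
  obtain c where c: "r = (\<Sum>k\<le>n-1. smult (c k) (Kpoly N p k))"
    using Kpoly_expand[OF p a1 a2] by auto
  have pr: "poly r = (\<lambda>x. \<Sum>m\<le>n-1. c m * Kr N p m x)"
    unfolding c by (rule ext) (simp add: poly_sum poly_Kpoly)
  have one: "ip N p (poly (Gp N p j n y)) (Kr N p m) = fdiffn j (Kr N p m) y" if m: "m \<le> n - 1" for m
  proof -
    have "ip N p (poly (Gp N p j n y)) (Kr N p m) = (\<Sum>k\<le>n-1. (fdiffn j (Kr N p k) y / Knorm N p k) * ip N p (Kr N p k) (Kr N p m))"
      unfolding poly_Gp_fun ip_sum_left ..
    also have "\<dots> = (\<Sum>k\<le>n-1. if k = m then fdiffn j (Kr N p k) y / Knorm N p k * Knorm N p m else 0)"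
      using m nN by (intro sum.cong refl) (auto simp: Kr_ortho[OF p] Knorm_ip)
    also have "\<dots> = fdiffn j (Kr N p m) y / Knorm N p m * Knorm N p m"
      using m by (simp add: sum.delta)
    also have "\<dots> = fdiffn j (Kr N p m) y"
    proof -
      have "m \<le> N" using m nN by simp
      then show ?thesis using Knorm_pos[OF p0 p1, of m N] by simp
    qed
    finally show ?thesis .
  qed
  have "ip N p (poly (Gp N p j n y)) (poly r) = (\<Sum>m\<le>n-1. c m * ip N p (poly (Gp N p j n y)) (Kr N p m))"
    unfolding pr ip_sum_right ..
  also have "\<dots> = (\<Sum>m\<le>n-1. c m * fdiffn j (Kr N p m) y)"
    by (intro sum.cong refl) (simp add: one)
  also have "\<dots> = fdiffn j (poly r) y"
    unfolding pr fdiffn_sum ..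
  finally show ?thesis .
qed

lemma deltan_pos:
  assumes p0: "0 < p" and p1: "p < 1" and l0: "0 \<le> lam" and m0: "0 \<le> mu" and nN: "n \<le> N"
  shows "1 \<le> deltan N p lam mu j n"
proof -
  define w where "w = (\<lambda>k. 1 / Knorm N p k)"
  define s where "s = (\<lambda>k. fdiffn j (Kr N p k) 0)"
  define t where "t = (\<lambda>k. fdiffn j (Kr N p k) (real N))"
  have w0: "\<And>k. k \<in> {..n-1} \<Longrightarrow> 0 \<le> w k"
    unfolding w_def using Knorm_pos[OF p0 p1] nN by (auto intro: less_imp_le)
  define a where "a = (\<Sum>k\<le>n-1. w k * (s k)^2)"
  define d where "d = (\<Sum>k\<le>n-1. w k * (t k)^2)"
  define b where "b = (\<Sum>k\<le>n-1. w k * s k * t k)"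
  have ka: "kern N p (n - 1) j j 0 0 = a" unfolding kern_def a_def w_def s_def
    by (simp add: power2_eq_square)
  have kd: "kern N p (n - 1) j j (real N) (real N) = d" unfolding kern_def d_def w_def t_def
    by (simp add: power2_eq_square)
  have kb: "kern N p (n - 1) j j 0 (real N) = b" unfolding kern_def b_def w_def s_def t_def
    by simp
  have kc: "kern N p (n - 1) j j (real N) 0 = b" unfolding kern_def b_def w_def s_def t_def
    by (simp add: ac_simps)
  have a0: "0 \<le> a" unfolding a_def using w0 by (intro sum_nonneg mult_nonneg_nonneg) auto
  have d0: "0 \<le> d" unfolding d_def using w0 by (intro sum_nonneg mult_nonneg_nonneg) auto
  have cs: "b^2 \<le> a * d" unfolding a_def b_def d_def by (rule cs_ineq) (use w0 in auto)
  have "deltan N p lam mu j n = 1 + lam * a + mu * d + lam * mu * (a * d - b^2)"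
    unfolding deltan_def ka kd kb kc by (simp add: power2_eq_square algebra_simps)
  moreover have "0 \<le> lam * a" "0 \<le> mu * d" "0 \<le> lam * mu * (a * d - b^2)"
    using l0 m0 a0 d0 cs by auto
  ultimately show ?thesis by linarith
qed

definition Up :: "nat \<Rightarrow> real \<Rightarrow> real \<Rightarrow> real \<Rightarrow> nat \<Rightarrow> nat \<Rightarrow> real poly" where
  "Up N p lam mu j n = Kpoly N p n - smult (lam * Phi1 N p lam mu j n) (Gp N p j n 0)
      - smult (mu * Phi2 N p lam mu j n) (Gp N p j n (real N))"

lemma poly_Up_fun: "poly (Up N p lam mu j n) = (\<lambda>x. Kr N p n x - (lam * Phi1 N p lam mu j n) * poly (Gp N p j n 0) x
      - (mu * Phi2 N p lam mu j n) * poly (Gp N p j n (real N)) x)"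
  unfolding Up_def by (rule ext) (simp add: poly_Kpoly)

lemma Up_deg:
  assumes p0: "0 < p" and n1: "1 \<le> n" and nN: "n \<le> N"
  shows "degree (Up N p lam mu j n) = n \<and> lead_coeff (Up N p lam mu j n) = 1"
proof -
  have p: "p \<noteq> 0" using p0 by simp
  have g0: "coeff (Gp N p j n y) n = 0" for y using deg_Gp[of N p j n y] n1 by (intro coeff_eq_0) simp
  have c: "coeff (Up N p lam mu j n) n = 1" unfolding Up_def using Kpoly_coeff_n[OF p nN] g0 by simp
  have g: "degree (Gp N p j n y) \<le> n" for y using deg_Gp[of N p j n y] by simp
  have "degree (Up N p lam mu j n) \<le> n" unfolding Up_def
    using Kpoly_deg_le[of N p n] g
    by (intro degree_diff_le order.trans[OF degree_smult_le]) auto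
  with c have "degree (Up N p lam mu j n) = n" using le_degree[of "Up N p lam mu j n" n] by simp
  with c show ?thesis by simp
qed

lemma cramer:
  fixes l m a b c d d0 dN P1 P2 \<delta> :: real
  assumes "\<delta> = (1 + l * a) * (1 + m * d) - l * m * b * c" "\<delta> \<noteq> 0"
    "P1 = (d0 * (1 + m * d) - m * b * dN) / \<delta>" "P2 = ((1 + l * a) * dN - l * c * d0) / \<delta>"
  shows "P1 = d0 - l * P1 * a - m * P2 * b" "P2 = dN - l * P1 * c - m * P2 * d"
proof -
  have e1: "P1 * \<delta> = d0 * (1 + m * d) - m * b * dN" using assms(2,3) by simp
  have e2: "P2 * \<delta> = (1 + l * a) * dN - l * c * d0" using assms(2,4) by simp
  have "(P1 + l * P1 * a + m * P2 * b) * \<delta> = (P1 * \<delta>) * (1 + l * a) + m * b * (P2 * \<delta>)"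
    by (simp add: algebra_simps)
  also have "\<dots> = d0 * \<delta>" unfolding e1 e2 by (simp add: assms(1) algebra_simps)
  finally have "P1 + l * P1 * a + m * P2 * b = d0" using assms(2) by simp
  then show "P1 = d0 - l * P1 * a - m * P2 * b" by simp
  have "(P2 + l * P1 * c + m * P2 * d) * \<delta> = (P2 * \<delta>) * (1 + m * d) + l * c * (P1 * \<delta>)"
    by (simp add: algebra_simps)
  also have "\<dots> = dN * \<delta>" unfolding e1 e2 by (simp add: assms(1) algebra_simps)
  finally have "P2 + l * P1 * c + m * P2 * d = dN" using assms(2) by simp
  then show "P2 = dN - l * P1 * c - m * P2 * d" by simp
qed

lemma fdiffn_Up:
  "fdiffn j (poly (Up N p lam mu j n)) y = fdiffn j (Kr N p n) y
     - lam * Phi1 N p lam mu j n * kern N p (n-1) j j y 0 - mu * Phi2 N p lam mu j n * kern N p (n-1) j j y (real N)"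
  unfolding poly_Up_fun fdiffn_diff fdiffn_cmult fdiffn_Gp by simp

lemma sip_diff: "sip N p lam mu j (\<lambda>x. f x - g x) h = sip N p lam mu j f h - sip N p lam mu j g h"
  unfolding sip_def fdiffn_diff by (simp add: left_diff_distrib right_diff_distrib sum_subtractf)

lemma ip_diff3: "ip N p (\<lambda>x. f x - a * g x - b * k x) h = ip N p f h - a * ip N p g h - b * ip N p k h"
  unfolding ip_def by (simp add: sum_subtractf[symmetric] sum_distrib_left algebra_simps)

lemma Up_orth:
  assumes p0: "0 < p" and p1: "p < 1" and l0: "0 < lam" and m0: "0 < mu" and nN: "n \<le> N"
    and dr: "degree r < n"
  shows "sip N p lam mu j (poly (Up N p lam mu j n)) (poly r) = 0"
proof -
  have p: "p \<noteq> 0" using p0 by simp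
  define P1 where "P1 = Phi1 N p lam mu j n"
  define P2 where "P2 = Phi2 N p lam mu j n"
  have d0: "deltan N p lam mu j n \<noteq> 0" using deltan_pos[OF p0 p1, of lam mu n N j] l0 m0 nN by simp
  note cr = cramer[OF deltan_def d0 Phi1_def Phi2_def]
  have ipU: "ip N p (poly (Up N p lam mu j n)) (poly r) = - lam * P1 * fdiffn j (poly r) 0 - mu * P2 * fdiffn j (poly r) (real N)"
    unfolding poly_Up_fun ip_diff3 Kr_ortho_low[OF p nN dr] ip_Gp[OF p0 p1 nN dr] P1_def P2_def by simp
  have U0: "fdiffn j (poly (Up N p lam mu j n)) 0 = P1"
    unfolding fdiffn_Up P1_def P2_def using cr(1) by simp
  have UN: "fdiffn j (poly (Up N p lam mu j n)) (real N) = P2"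
    unfolding fdiffn_Up P1_def P2_def using cr(2) by simp
  show ?thesis unfolding sip_def
    using ipU U0 UN unfolding ip_def by simp
qed

lemma KSpoly_eq:
  assumes p0: "0 < p" and p1: "p < 1" and l0: "0 < lam" and m0: "0 < mu" and n1: "1 \<le> n" and nN: "n \<le> N"
  shows "KSpoly N p lam mu j n = Up N p lam mu j n"
  unfolding KSpoly_def
proof (rule the_equality)
  show "degree (Up N p lam mu j n) = n \<and> lead_coeff (Up N p lam mu j n) = 1 \<and>
    (\<forall>r. degree r < n \<longrightarrow> sip N p lam mu j (poly (Up N p lam mu j n)) (poly r) = 0)"
  proof -
    have u: "degree (Up N p lam mu j n) = n" "lead_coeff (Up N p lam mu j n) = 1"
      using Up_deg[OF p0 n1 nN] by blast+
    show ?thesis using u(1) u(2) Up_orth[OF p0 p1 l0 m0 nN] by blast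
  qed
next
  fix q assume q: "degree q = n \<and> lead_coeff q = 1 \<and> (\<forall>r. degree r < n \<longrightarrow> sip N p lam mu j (poly q) (poly r) = 0)"
  define U where "U = Up N p lam mu j n"
  define e where "e = q - U"
  have dU0: "degree U = n" "lead_coeff U = 1" using Up_deg[OF p0 n1 nN] unfolding U_def by blast+
  then have dU: "degree U = n" "coeff U n = 1" by auto
  have q1: "degree q = n" and q2: "lead_coeff q = 1" using q by blast+
  have q3: "coeff q n = 1" using q1 q2 by simp
  have ce: "coeff e n = 0" unfolding e_def using q3 dU by simp
  have "degree e \<le> n" unfolding e_def using q1 dU by (intro degree_diff_le) auto
  have de: "degree e < n"
  proof (cases "e = 0")
    case True then show ?thesis using n1 by simp
  next
    case False
    then have "coeff e (degree e) \<noteq> 0" by simp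
    with ce \<open>degree e \<le> n\<close> show ?thesis by (cases "degree e = n") auto
  qed
  have s1: "sip N p lam mu j (poly q) (poly e) = 0" using q de by blast
  have s2: "sip N p lam mu j (poly U) (poly e) = 0" unfolding U_def by (rule Up_orth[OF p0 p1 l0 m0 nN de])
  have pe: "poly e = (\<lambda>x. poly q x - poly U x)" unfolding e_def by (rule ext) simp
  have "sip N p lam mu j (poly e) (poly e) = 0" unfolding pe[of] sip_diff
    using s1 s2 unfolding pe by simp
  then have "(\<Sum>x\<le>N. poly e (real x) * poly e (real x) * wt N p x)
      + lam * (fdiffn j (poly e) 0)^2 + mu * (fdiffn j (poly e) (real N))^2 = 0"
    unfolding sip_def by (simp add: power2_eq_square)
  moreover have nn: "\<And>x. x \<in> {..N} \<Longrightarrow> 0 \<le> poly e (real x) * poly e (real x) * wt N p x"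
    using wt_pos[OF p0 p1] by (simp add: less_imp_le)
  moreover have "0 \<le> lam * (fdiffn j (poly e) 0)^2" "0 \<le> mu * (fdiffn j (poly e) (real N))^2"
    using l0 m0 by auto
  moreover have "0 \<le> (\<Sum>x\<le>N. poly e (real x) * poly e (real x) * wt N p x)"
    using nn by (rule sum_nonneg)
  ultimately have "(\<Sum>x\<le>N. poly e (real x) * poly e (real x) * wt N p x) = 0"
    by linarith
  then have all0: "\<forall>x\<in>{..N}. poly e (real x) * poly e (real x) * wt N p x = 0"
    using sum_nonneg_eq_0_iff[OF finite_atMost nn] by simp
  have z: "\<forall>x\<le>N. poly e (real x) = 0"
  proof (intro allI impI)
    fix x assume x: "x \<le> N"
    then have "poly e (real x) * poly e (real x) * wt N p x = 0" using all0 by simp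
    moreover have "wt N p x \<noteq> 0" using wt_pos[OF p0 p1 x] by simp
    ultimately show "poly e (real x) = 0" by simp
  qed
  show "q = Up N p lam mu j n"
  proof (rule ccontr)
    assume "q \<noteq> Up N p lam mu j n"
    then have nz: "e \<noteq> 0" unfolding e_def U_def by simp
    have "real ` {..N} \<subseteq> {x. poly e x = 0}" using z by auto
    then have "card (real ` {..N}) \<le> card {x. poly e x = 0}"
      by (intro card_mono poly_roots_finite nz)
    also have "\<dots> \<le> degree e" by (rule card_poly_roots_bound[OF nz])
    finally have "card (real ` {..N}) \<le> degree e" .
    moreover have "card (real ` {..N}) = Suc N" by (subst card_image) (auto simp: inj_on_def)
    ultimately show False using de nN by simp
  qed
qed

lemma KS_conn:
  assumes p0: "0 < p" and p1: "p < 1" and l0: "0 < lam" and m0: "0 < mu" and n1: "1 \<le> n" and nN: "n \<le> N"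
    and adm: "admissible N j x"
  shows "KS N p lam mu j n x = C1 N p lam mu j n x * Kr N p n x + D1 N p lam mu j n x * Kr N p (n - 1) x"
proof -
  have a0: "ffac (x - 0) (Suc j) \<noteq> 0" and aN: "ffac (x - real N) (Suc j) \<noteq> 0"
    using adm unfolding admissible_def by auto
  have "KS N p lam mu j n x = Kr N p n x - lam * Phi1 N p lam mu j n * kern N p (n-1) 0 j x 0
      - mu * Phi2 N p lam mu j n * kern N p (n-1) 0 j x (real N)"
    unfolding KS_def KSpoly_eq[OF p0 p1 l0 m0 n1 nN] poly_Up_fun poly_Gp by simp
  also have "\<dots> = C1 N p lam mu j n x * Kr N p n x + D1 N p lam mu j n x * Kr N p (n - 1) x"
    unfolding kern_AB[OF p0 p1 n1 nN a0] kern_AB[OF p0 p1 n1 nN aN] C1_def D1_def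
    by (simp add: algebra_simps)
  finally show ?thesis .
qed

lemma ladder_alg:
  fixes y u1 u0 c1 c0 d1 d0 P1 P0 Q1 Q0 R1 m g g' a b :: real
  assumes u1: "u1 = c1 * P1 + d1 * Q1" and u0: "u0 = c0 * P0 + d0 * Q0"
    and sP: "y * (P1 - P0) = m * P1 + g * Q1"
    and sQ: "y * (Q1 - Q0) = (m - 1) * Q1 + g' * R1"
    and rc: "y * Q1 = P1 + a * Q1 + b * R1" and b0: "b \<noteq> 0"
  shows "y * (u1 - u0) = (y * (c1 - c0) + m * c0 - g' * d0 / b) * P1
        + (y * (d1 - d0) + g * c0 + g' * (y - a) * d0 / b + (m - 1) * d0) * Q1"
proof -
  have R: "R1 = (y * Q1 - P1 - a * Q1) / b" using rc b0 by (simp add: field_simps)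
  have P0: "y * P0 = y * P1 - m * P1 - g * Q1" using sP by (simp add: algebra_simps)
  have Q0: "y * Q0 = y * Q1 - (m - 1) * Q1 - g' * R1" using sQ by (simp add: algebra_simps)
  have "y * (u1 - u0) = y * (c1 - c0) * P1 + y * (d1 - d0) * Q1 + c0 * (y * P1 - y * P0) + d0 * (y * Q1 - y * Q0)"
    unfolding u1 u0 by (simp add: algebra_simps)
  also have "\<dots> = y * (c1 - c0) * P1 + y * (d1 - d0) * Q1 + c0 * (m * P1 + g * Q1) + d0 * ((m - 1) * Q1 + g' * R1)"
    unfolding P0 Q0 by (simp add: algebra_simps)
  also have "\<dots> = (y * (c1 - c0) + m * c0 - g' * d0 / b) * P1
        + (y * (d1 - d0) + g * c0 + g' * (y - a) * d0 / b + (m - 1) * d0) * Q1"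
    unfolding R using b0 by (simp add: field_simps)
  finally show ?thesis .
qed

lemma ladder_KS:
  assumes p0: "0 < p" and p1: "p < 1" and l0: "0 < lam" and m0: "0 < mu" and m2: "2 \<le> m" and mN: "m \<le> N"
    and a1: "admissible N j y" and a2: "admissible N j (y - 1)"
  shows "y * (KS N p lam mu j m y - KS N p lam mu j m (y - 1))
       = E1 N p lam mu j m y * Kr N p m y + F1 N p lam mu j m y * Kr N p (m - 1) y"
proof -
  have p: "p \<noteq> 0" using p0 by simp
  obtain l where l: "m = Suc (Suc l)" using m2 by (metis add_2_eq_Suc le_Suc_ex)
  have u1: "KS N p lam mu j m y = C1 N p lam mu j m y * Kr N p m y + D1 N p lam mu j m y * Kr N p (m - 1) y"
    by (rule KS_conn[OF p0 p1 l0 m0 _ mN a1]) (use m2 in simp)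
  have u0: "KS N p lam mu j m (y - 1) = C1 N p lam mu j m (y - 1) * Kr N p m (y - 1) + D1 N p lam mu j m (y - 1) * Kr N p (m - 1) (y - 1)"
    by (rule KS_conn[OF p0 p1 l0 m0 _ mN a2]) (use m2 in simp)
  have sP: "y * (Kr N p m y - Kr N p m (y - 1)) = real m * Kr N p m y + real m * p * (real N - real m + 1) * Kr N p (m - 1) y"
    using Kr_struct[of y N p "Suc l"] unfolding l by simp
  have sQ: "y * (Kr N p (m - 1) y - Kr N p (m - 1) (y - 1)) = (real m - 1) * Kr N p (m - 1) y
      + (real m - 1) * p * (real N - real m + 2) * Kr N p (m - 2) y"
    using Kr_struct[of y N p l] unfolding l by (simp add: algebra_simps)
  have rc: "y * Kr N p (m - 1) y = Kr N p m y + alpha N p (m - 1) * Kr N p (m - 1) y + beta N p (m - 1) * Kr N p (m - 2) y"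
    using Kr_rec_gen[OF p, of "m - 1" N y] mN unfolding l by simp
  have i1: "1 \<le> m - 1" and i2: "m - 1 \<le> N" using m2 mN by arith+
  have b0: "beta N p (m - 1) \<noteq> 0" using beta_pos[OF p0 p1 i1 i2] by simp
  show ?thesis
    unfolding E1_def F1_def bdiff_def
    by (rule ladder_alg[OF u1 u0 sP sQ rc b0])
qed

lemma conv_alg:
  fixes v c d P Q R y a b :: real
  assumes "v = c * Q + d * R" "y * Q = P + a * Q + b * R" "b \<noteq> 0"
  shows "v = (- d / b) * P + (c + (- d / b) * (a - y)) * Q"
proof -
  have R: "R = (y * Q - P - a * Q) / b" using assms(2,3) by (simp add: field_simps)
  show ?thesis unfolding assms(1) R using assms(3) by (simp add: field_simps)
qed

lemma RR_alg:
  fixes u v du dv y C1 D1 C2 D2 E1 F1 E2 F2 P Q :: real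
  assumes "u = C1 * P + D1 * Q" "v = C2 * P + D2 * Q" "y * du = E1 * P + F1 * Q" "y * dv = E2 * P + F2 * Q"
  shows "y * (C1 * D2 - C2 * D1) * du = - ((-1)^1 * (E1 * D2 - F1 * C2)) * u + ((-1)^1 * (E1 * D1 - F1 * C1)) * v"
    and "y * (C1 * D2 - C2 * D1) * dv = ((-1)^2 * (E2 * D2 - F2 * C2)) * u - ((-1)^2 * (E2 * D1 - F2 * C1)) * v"
proof -
  have "y * (C1 * D2 - C2 * D1) * du = (C1 * D2 - C2 * D1) * (y * du)" by (simp add: algebra_simps)
  also have "\<dots> = - ((-1)^1 * (E1 * D2 - F1 * C2)) * u + ((-1)^1 * (E1 * D1 - F1 * C1)) * v"
    unfolding assms by (simp add: algebra_simps)
  finally show "y * (C1 * D2 - C2 * D1) * du = - ((-1)^1 * (E1 * D2 - F1 * C2)) * u + ((-1)^1 * (E1 * D1 - F1 * C1)) * v" .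
  have "y * (C1 * D2 - C2 * D1) * dv = (C1 * D2 - C2 * D1) * (y * dv)" by (simp add: algebra_simps)
  also have "\<dots> = ((-1)^2 * (E2 * D2 - F2 * C2)) * u - ((-1)^2 * (E2 * D1 - F2 * C1)) * v"
    unfolding assms by (simp add: algebra_simps)
  finally show "y * (C1 * D2 - C2 * D1) * dv = ((-1)^2 * (E2 * D2 - F2 * C2)) * u - ((-1)^2 * (E2 * D1 - F2 * C1)) * v" .
qed

lemma final_alg:
  fixes T0 T1 a a' b b' c d u0 u1 u2 v0 v1 :: real
  assumes r1: "T0 * (u0 - u1) = - b * u0 + a * v0"
    and r1': "T1 * (u1 - u2) = - b' * u1 + a' * v1"
    and r2: "T0 * (v0 - v1) = d * u0 - c * v0"
    and a0: "a \<noteq> 0"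
  shows "T0 * T1 * ((u0 - u1) - (u1 - u2))
     + (T0 * ((T0 - T1) + b' + c) - (a - a') * (T0 + c) * T0 / a) * (u0 - u1)
     + (T0 * (b - b') + c * b - (a - a') * b * (T0 + c) / a - a' * d) * u0 = 0"
proof -
  have v0: "v0 = (T0 * (u0 - u1) + b * u0) / a" using r1 a0 by (simp add: field_simps)
  have e: "T0 * (a' * v1) = (T0 + c) * a' * v0 - a' * d * u0"
  proof -
    have "T0 * (a' * v1) = a' * (T0 * v0 - T0 * (v0 - v1))" by (simp add: algebra_simps)
    also have "\<dots> = (T0 + c) * a' * v0 - a' * d * u0" unfolding r2 by (simp add: algebra_simps)
    finally show ?thesis .
  qed
  have a'v1: "a' * v1 = T1 * (u1 - u2) + b' * u1" using r1' by simp
  have main: "T0 * (T1 * (u1 - u2) + b' * u1) = (T0 + c) * a' * v0 - a' * d * u0"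
    using e unfolding a'v1 .
  have main2: "a * (T0 * (T1 * (u1 - u2) + b' * u1)) = (T0 + c) * a' * (T0 * (u0 - u1) + b * u0) - a * a' * d * u0"
  proof -
    have "a * (T0 * (T1 * (u1 - u2) + b' * u1)) = a * ((T0 + c) * a' * v0 - a' * d * u0)" unfolding main ..
    also have "\<dots> = (T0 + c) * a' * (a * v0) - a * a' * d * u0" by (simp add: algebra_simps)
    also have "a * v0 = T0 * (u0 - u1) + b * u0" unfolding v0 using a0 by simp
    finally show ?thesis .
  qed
  define G where "G = T0 * T1 * ((u0 - u1) - (u1 - u2))
     + (T0 * ((T0 - T1) + b' + c) - (a - a') * (T0 + c) * T0 / a) * (u0 - u1)
     + (T0 * (b - b') + c * b - (a - a') * b * (T0 + c) / a - a' * d) * u0"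
  have "a * G = (T0 + c) * a' * (T0 * (u0 - u1) + b * u0) - a * a' * d * u0 - a * (T0 * (T1 * (u1 - u2) + b' * u1))"
    unfolding G_def using a0 by (simp add: divide_simps) (simp add: algebra_simps)
  then have "a * G = 0" unfolding main2 by simp
  then have "G = 0" using a0 by simp
  then show ?thesis unfolding G_def .
qed

lemma RR_at:
  assumes p0: "0 < p" and p1: "p < 1" and l0: "0 < lam" and m0: "0 < mu" and n3: "3 \<le> n" and nN: "n \<le> N"
    and a1: "admissible N j y" and a2: "admissible N j (y - 1)"
  shows "Theta N p lam mu j n y * (KS N p lam mu j n y - KS N p lam mu j n (y - 1))
       = - Lam N p lam mu j n y 2 1 * KS N p lam mu j n y + Lam N p lam mu j n y 1 1 * KS N p lam mu j (n - 1) y"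
    and "Theta N p lam mu j n y * (KS N p lam mu j (n - 1) y - KS N p lam mu j (n - 1) (y - 1))
       = Lam N p lam mu j n y 2 2 * KS N p lam mu j n y - Lam N p lam mu j n y 1 2 * KS N p lam mu j (n - 1) y"
proof -
  have p: "p \<noteq> 0" using p0 by simp
  have i1: "1 \<le> n - 1" and i2: "n - 1 \<le> N" and i3: "2 \<le> n - 1" and i4: "Suc (n - 1) \<le> N" using n3 nN by arith+
  have b0: "beta N p (n - 1) \<noteq> 0" using beta_pos[OF p0 p1 i1 i2] by simp
  have rc: "y * Kr N p (n - 1) y = Kr N p n y + alpha N p (n - 1) * Kr N p (n - 1) y + beta N p (n - 1) * Kr N p (n - 1 - 1) y"
    using Kr_rec_gen[OF p i4, of y] n3 by simp
  have u: "KS N p lam mu j n y = C1 N p lam mu j n y * Kr N p n y + D1 N p lam mu j n y * Kr N p (n - 1) y"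
    by (rule KS_conn[OF p0 p1 l0 m0 _ nN a1]) (use n3 in simp)
  have v0: "KS N p lam mu j (n - 1) y = C1 N p lam mu j (n - 1) y * Kr N p (n - 1) y + D1 N p lam mu j (n - 1) y * Kr N p (n - 1 - 1) y"
    by (rule KS_conn[OF p0 p1 l0 m0 i1 i2 a1])
  have v: "KS N p lam mu j (n - 1) y = C2 N p lam mu j n y * Kr N p n y + D2 N p lam mu j n y * Kr N p (n - 1) y"
    unfolding D2_def C2_def by (rule conv_alg[OF v0 rc b0])
  have lu: "y * (KS N p lam mu j n y - KS N p lam mu j n (y - 1)) = E1 N p lam mu j n y * Kr N p n y + F1 N p lam mu j n y * Kr N p (n - 1) y"
    by (rule ladder_KS[OF p0 p1 l0 m0 _ nN a1 a2]) (use n3 in simp)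
  have lv0: "y * (KS N p lam mu j (n - 1) y - KS N p lam mu j (n - 1) (y - 1)) = E1 N p lam mu j (n - 1) y * Kr N p (n - 1) y + F1 N p lam mu j (n - 1) y * Kr N p (n - 1 - 1) y"
    by (rule ladder_KS[OF p0 p1 l0 m0 i3 i2 a1 a2])
  have lv: "y * (KS N p lam mu j (n - 1) y - KS N p lam mu j (n - 1) (y - 1)) = E2 N p lam mu j n y * Kr N p n y + F2 N p lam mu j n y * Kr N p (n - 1) y"
    unfolding F2_def E2_def by (rule conv_alg[OF lv0 rc b0])
  note R = RR_alg[OF u v lu lv]
  show "Theta N p lam mu j n y * (KS N p lam mu j n y - KS N p lam mu j n (y - 1))
       = - Lam N p lam mu j n y 2 1 * KS N p lam mu j n y + Lam N p lam mu j n y 1 1 * KS N p lam mu j (n - 1) y"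
    unfolding Theta_def Lam_def Ef_def Ff_def Cf_def Df_def using R(1) by simp
  show "Theta N p lam mu j n y * (KS N p lam mu j (n - 1) y - KS N p lam mu j (n - 1) (y - 1))
       = Lam N p lam mu j n y 2 2 * KS N p lam mu j n y - Lam N p lam mu j n y 1 2 * KS N p lam mu j (n - 1) y"
    unfolding Theta_def Lam_def Ef_def Ff_def Cf_def Df_def using R(2) by simp
qed

theorem mainTheorem7:
  fixes N n j :: nat and p lam mu x :: real
  assumes "0 < p" "p < 1" "0 < lam" "0 < mu"
    and "3 \<le> n" "n \<le> N"
    and "admissible N j x" "admissible N j (x - 1)" "admissible N j (x - 2)"
    and "Lam N p lam mu j n x 1 1 \<noteq> 0"
  shows "(let Th = Theta N p lam mu j n;
              L = (\<lambda>y i k. Lam N p lam mu j n y i k);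
              K = KS N p lam mu j n;
              FF = Th x * Th (x - 1);
              GG = Th x * (bdiff Th x + L (x - 1) 2 1 + L x 1 2)
                   - bdiff (\<lambda>y. L y 1 1) x * (Th x + L x 1 2) * Th x / L x 1 1;
              HH = Th x * bdiff (\<lambda>y. L y 2 1) x + L x 1 2 * L x 2 1
                   - bdiff (\<lambda>y. L y 1 1) x * L x 2 1 * (Th x + L x 1 2) / L x 1 1
                   - L (x - 1) 1 1 * L x 2 2
          in FF * bdiff (bdiff K) x + GG * bdiff K x + HH * K x = 0)"
proof -
  have xx: "x - 1 - 1 = x - 2" by simp
  have a3: "admissible N j (x - 1 - 1)" unfolding xx by (rule assms(9))
  note A = RR_at[OF assms(1-6) assms(7) assms(8)]
  note B = RR_at[OF assms(1-6) assms(8) a3]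
  show ?thesis unfolding Let_def bdiff_def xx[symmetric]
    by (rule final_alg[OF A(1) B(1) A(2) assms(10)])
qed


end
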